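(* Assume that (A1), (A2), (A3) hold and that $\xi$ drifts to $-\infty$, and let $\beta_0\in(0,\beta)$ be such that $\Psi(\beta_0)<0$ ($\beta$ being the constant in (A3)). Fix $\varepsilon>0$. Then for every $n$ sufficiently large and every integer $1\le i\le\varepsilon^2n$, $$\mathbb P\big(X_i\text{ reaches }[\varepsilon n,\infty)\text{ before }\{1,\dots,K\}\big)\le2\varepsilon^{\beta_0},$$ where the event means $\inf\{k\ge0:X_i(k)\ge\varepsilon n\}<\inf\{k\ge0:X_i(k)\le K\}$.
   Context: Let $\mathbb N=\{1,2,\dots\}$. For every $n\ge1$ let $(p_{n,k})_{k\ge1}$ be nonnegative reals with $\sum_{k\ge1}p_{n,k}=1$, and let $(X_n(k))_{k\ge0}$ be the discrete-time Markov chain on $\mathbb N$ with $X_n(0)=n$ and $\mathbb P(X_n(k+1)=j\mid X_n(k)=i)=p_{i,j}$. Let $\Pi_n^*(dx)=\sum_{k\ge1}p_{n,k}\,\delta_{\ln k-\ln n}(dx)$. Let $(a_n)_{n\ge0}$ be positive reals, regularly varying with index $\gamma>0$. Let $\Pi$ be a measure on $\mathbb R\setminus\{0\}$ with $\Pi(\{-1,1\})=0$ and $\int(1\wedge x^2)\,\Pi(dx)<\infty$. (A1): for every continuous $f$ with compact support in $[0,\infty]\setminus\{1\}$, $a_n\,\mathbb E[f(X_n(1)/n)]\to\int_{\mathbb R}f(e^x)\,\Pi(dx)$. (A2): there exist $b\in\mathbb R$, $\sigma^2\ge0$ with $a_n\int_{-1}^1x\,\Pi_n^*(dx)\to b$ and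 $a_n\int_{-1}^1x^2\,\Pi_n^*(dx)\to\sigma^2+\int_{-1}^1x^2\,\Pi(dx)$. (A3): there exists $\beta>0$ with $\limsup_na_n\int_1^\infty e^{\beta x}\,\Pi_n^*(dx)<\infty$. $\Psi(\lambda)=\frac12\sigma^2\lambda^2+b\lambda+\int(e^{\lambda x}-1-\lambda x\mathbb 1_{|x|\le1})\,\Pi(dx)$ where finite; $\xi$ is the Lévy process with $\xi(0)=0$ and characteristic exponent $-\frac12\sigma^2\lambda^2+ib\lambda+\int(e^{i\lambda x}-1-i\lambda x\mathbb 1_{|x|\le1})\,\Pi(dx)$; it drifts to $-\infty$ if $\xi(t)\to-\infty$ a.s. $K\ge1$ is an integer such that for every $n\ge1$, with positive probability $X_n(i)\le K$ for some $i\ge0$. *)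

theory Defs
  imports "HOL-Probability.Probability"
begin

definition regularly_varying_seq :: "real \<Rightarrow> (nat \<Rightarrow> real) \<Rightarrow> bool" where
  "regularly_varying_seq \<gamma> a \<longleftrightarrow> (\<forall>n. a n > 0) \<and>
     (\<forall>l>0. ((\<lambda>n. a (nat \<lfloor>l * real n\<rfloor>) / a n) \<longlongrightarrow> l powr \<gamma>) sequentially)"

text \<open>Integral of g against Pi*_n = sum_k p(n,k) delta_(ln k - ln n); states k >= 1.\<close>
definition Pistar_int :: "(nat \<Rightarrow> nat \<Rightarrow> real) \<Rightarrow> nat \<Rightarrow> (real \<Rightarrow> real) \<Rightarrow> real" where
  "Pistar_int p n g = (\<Sum>k. p n (Suc k) * g (ln (real (Suc k)) - ln (real n)))"

definition Pistar_nn :: "(nat \<Rightarrow> nat \<Rightarrow> real) \<Rightarrow> nat \<Rightarrow> (real \<Rightarrow> real) \<Rightarrow> ennreal" where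
  "Pistar_nn p n g = (\<Sum>k. ennreal (p n (Suc k) * g (ln (real (Suc k)) - ln (real n))))"

text \<open>The Laplace exponent Psi (meaningful where the integral is finite).\<close>
definition Psi :: "real \<Rightarrow> real \<Rightarrow> real measure \<Rightarrow> real \<Rightarrow> real" where
  "Psi \<sigma>2 b Lm l = \<sigma>2 * l\<^sup>2 / 2 + b * l +
     (\<integral>x. exp (l * x) - 1 - l * x * indicator {-1..1} x \<partial>Lm)"

definition levy_exponent :: "real \<Rightarrow> real \<Rightarrow> real measure \<Rightarrow> real \<Rightarrow> complex" where
  "levy_exponent \<sigma>2 b Lm u = complex_of_real (- \<sigma>2 * u\<^sup>2 / 2) + \<i> * complex_of_real (b * u) +
     (CLINT x|Lm. iexp (u * x) - 1 - \<i> * complex_of_real (u * x * indicator {-1..1} x))"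

definition levy_process :: "'b measure \<Rightarrow> (real \<Rightarrow> 'b \<Rightarrow> real) \<Rightarrow> (real \<Rightarrow> complex) \<Rightarrow> bool" where
  "levy_process N \<xi> \<phi> \<longleftrightarrow> prob_space N \<and>
     (\<forall>t. \<xi> t \<in> borel_measurable N) \<and>
     (\<forall>\<omega>\<in>space N. \<xi> 0 \<omega> = 0) \<and>
     (\<forall>\<omega>\<in>space N. \<forall>t\<ge>0. continuous (at_right t) (\<lambda>s. \<xi> s \<omega>) \<and>
         (t > 0 \<longrightarrow> (\<exists>L. ((\<lambda>s. \<xi> s \<omega>) \<longlongrightarrow> L) (at_left t)))) \<and>
     (\<forall>(t :: nat \<Rightarrow> real) m. 0 \<le> t 0 \<and> strict_mono t \<longrightarrow>
         prob_space.indep_vars N (\<lambda>_. borel) (\<lambda>j \<omega>. \<xi> (t (Suc j)) \<omega> - \<xi> (t j) \<omega>) {..<m}) \<and>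
     (\<forall>s\<ge>0. \<forall>t\<ge>0. distr N borel (\<lambda>\<omega>. \<xi> (s + t) \<omega> - \<xi> s \<omega>) = distr N borel (\<xi> t)) \<and>
     (\<forall>t\<ge>0. \<forall>u. char (distr N borel (\<xi> t)) u = exp (complex_of_real t * \<phi> u))"

definition drifts_to_neg_infty :: "'b measure \<Rightarrow> (real \<Rightarrow> 'b \<Rightarrow> real) \<Rightarrow> bool" where
  "drifts_to_neg_infty N \<xi> \<longleftrightarrow> (AE \<omega> in N. filterlim (\<lambda>t. \<xi> t \<omega>) at_bot at_top)"

definition hit_time :: "(nat \<Rightarrow> 'c) \<Rightarrow> 'c set \<Rightarrow> enat" where
  "hit_time f A = (if \<exists>k. f k \<in> A then enat (LEAST k. f k \<in> A) else \<infinity>)"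

end

theory Submission
  imports Defs
begin

lemma pmf_integral_cong:
  fixes f g :: "'a \<Rightarrow> real"
  shows "(\<And>x. x \<in> set_pmf M \<Longrightarrow> f x = g x) \<Longrightarrow> measure_pmf.expectation M f = measure_pmf.expectation M g"
  by (rule integral_cong_AE) (auto simp: AE_measure_pmf_iff)

definition kern :: "(nat \<Rightarrow> nat \<Rightarrow> real) \<Rightarrow> nat \<Rightarrow> nat pmf" where
  "kern p j = embed_pmf (\<lambda>l. if l = 0 then 0 else p j l)"

lemma kern_pmf:
  assumes nn: "\<And>n k. p n k \<ge> 0" and s: "(\<lambda>k. p j (Suc k)) sums 1"
  shows "pmf (kern p j) l = (if l = 0 then 0 else p j l)"
proof -
  let ?f = "\<lambda>l. if l = 0 then 0 else p j l"
  have fs: "?f sums 1" using s sums_Suc_iff[of ?f 1] by simp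
  have "(\<integral>\<^sup>+ x. ennreal (?f x) \<partial>count_space UNIV) = (\<Sum>x. ennreal (?f x))"
    by (rule nn_integral_count_space_nat)
  also have "\<dots> = ennreal (\<Sum>x. ?f x)"
    using fs nn by (intro suminf_ennreal2) (auto simp: sums_summable)
  also have "\<dots> = 1" using fs sums_unique by (metis ennreal_1)
  finally show ?thesis unfolding kern_def using nn by (subst pmf_embed_pmf) auto
qed

lemma kern_set:
  assumes nn: "\<And>n k. p n k \<ge> 0" and s: "(\<lambda>k. p j (Suc k)) sums 1"
  shows "l \<in> set_pmf (kern p j) \<Longrightarrow> l \<ge> 1"
  using kern_pmf[of p j l, OF nn s] by (cases l) (auto simp: set_pmf_eq)

lemma kern_expect:
  assumes nn: "\<And>n k. p n k \<ge> 0" and s: "(\<lambda>k. p j (Suc k)) sums 1"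
    and sm: "summable (\<lambda>k. \<bar>p j (Suc k) * g (Suc k)\<bar>)"
  shows "measure_pmf.expectation (kern p j) g = (\<Sum>k. p j (Suc k) * g (Suc k))"
proof -
  let ?F = "\<lambda>x. pmf (kern p j) x * g x"
  have F: "?F x = (if x = 0 then 0 else p j x * g x)" for x
    using kern_pmf[of p j, OF nn s] by simp
  have sF: "summable (\<lambda>n. norm (?F n))"
    using sm summable_Suc_iff[of "\<lambda>n. norm (?F n)"] by (simp add: F)
  have "measure_pmf.expectation (kern p j) g = infsetsum ?F UNIV"
    by (rule pmf_expectation_eq_infsetsum)
  also have "\<dots> = (\<Sum>n. ?F n)"
    using sF by (intro infsetsum_nat') (simp add: abs_summable_on_nat_iff')
  also have "\<dots> = (\<Sum>k. ?F (Suc k))"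
  proof -
    have s2: "summable ?F" by (rule summable_norm_cancel[OF sF])
    show ?thesis using suminf_split_head[OF s2] F[of 0] by simp
  qed
  finally show ?thesis by (simp add: F)
qed

fun pathL :: "(nat \<Rightarrow> nat \<Rightarrow> real) \<Rightarrow> nat \<Rightarrow> nat \<Rightarrow> nat list pmf" where
  "pathL p 0 j = return_pmf [j]"
| "pathL p (Suc k) j = bind_pmf (kern p j) (\<lambda>l. map_pmf (Cons j) (pathL p k l))"

definition stoch :: "(nat \<Rightarrow> nat \<Rightarrow> real) \<Rightarrow> bool" where
  "stoch p \<longleftrightarrow> (\<forall>n k. p n k \<ge> 0) \<and> (\<forall>n\<ge>1. (\<lambda>k. p n (Suc k)) sums 1)"

lemma stoch_kern_set: "stoch p \<Longrightarrow> j \<ge> 1 \<Longrightarrow> l \<in> set_pmf (kern p j) \<Longrightarrow> l \<ge> 1"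
  unfolding stoch_def using kern_set by blast

lemma stoch_kern_pmf: "stoch p \<Longrightarrow> j \<ge> 1 \<Longrightarrow> pmf (kern p j) l = (if l = 0 then 0 else p j l)"
  unfolding stoch_def using kern_pmf by blast

lemma pathL_set:
  assumes "stoch p" "j \<ge> 1"
  shows "ys \<in> set_pmf (pathL p k j) \<Longrightarrow> length ys = Suc k \<and> ys ! 0 = j \<and> (\<forall>y\<in>set ys. y \<ge> 1)"
  using assms(2)
proof (induction k arbitrary: j ys)
  case 0
  then show ?case by auto
next
  case (Suc k)
  then obtain l ys' where l: "l \<in> set_pmf (kern p j)" and ys': "ys' \<in> set_pmf (pathL p k l)"
    and ys: "ys = j # ys'" by auto
  have "l \<ge> 1" using stoch_kern_set[OF assms(1)] l Suc.prems by auto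
  then show ?case using Suc.IH[OF ys'] ys Suc.prems by auto
qed

lemma pathL_pmf_step:
  assumes "stoch p" "j \<ge> 1"
  shows "pmf (pathL p (Suc k) j) (y0 # ys') =
     (if y0 = j then pmf (kern p j) (ys'!0) * pmf (pathL p k (ys'!0)) ys' else 0)"
proof -
  have "pmf (pathL p (Suc k) j) (y0 # ys') =
     measure_pmf.expectation (kern p j) (\<lambda>l. pmf (map_pmf (Cons j) (pathL p k l)) (y0 # ys'))"
    by (simp add: pmf_bind)
  also have "\<dots> = measure_pmf.expectation (kern p j)
      (\<lambda>l. if y0 = j then indicator {ys'!0} l * pmf (pathL p k (ys'!0)) ys' else 0)"
  proof (intro pmf_integral_cong)
    fix l assume l: "l \<in> set_pmf (kern p j)"
    have l1: "l \<ge> 1" using stoch_kern_set[OF assms] l by auto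
    show "pmf (map_pmf (Cons j) (pathL p k l)) (y0 # ys') =
       (if y0 = j then indicator {ys'!0} l * pmf (pathL p k (ys'!0)) ys' else 0)"
    proof (cases "y0 = j")
      case True
      have "pmf (map_pmf (Cons j) (pathL p k l)) (y0 # ys') = pmf (pathL p k l) ys'"
        using True by (simp add: pmf_map_inj')
      also have "\<dots> = indicator {ys'!0} l * pmf (pathL p k (ys'!0)) ys'"
      proof (cases "l = ys'!0")
        case False
        then have "ys' \<notin> set_pmf (pathL p k l)" using pathL_set[OF assms(1) l1] by auto
        then show ?thesis using False by (simp add: set_pmf_eq)
      qed simp
      finally show ?thesis using True by simp
    next
      case False
      then have "y0 # ys' \<notin> set_pmf (map_pmf (Cons j) (pathL p k l))" by auto
      then show ?thesis using False by (simp add: set_pmf_eq)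
    qed
  qed
  also have "\<dots> = (if y0 = j then pmf (kern p j) (ys'!0) * pmf (pathL p k (ys'!0)) ys' else 0)"
    by (auto simp: measure_pmf_single)
  finally show ?thesis .
qed

lemma pathL_pmf:
  assumes "stoch p" "j \<ge> 1" "length ys = Suc k" "\<forall>y\<in>set ys. y \<ge> 1"
  shows "pmf (pathL p k j) ys = (if ys ! 0 = j then 1 else 0) * (\<Prod>m<k. p (ys!m) (ys!Suc m))"
  using assms(2-)
proof (induction k arbitrary: j ys)
  case 0
  then obtain y where "ys = [y]" by (cases ys) auto
  then show ?case by (auto simp: pmf_return)
next
  case (Suc k)
  then obtain y0 ys' where ys: "ys = y0 # ys'" by (cases ys) auto
  have ys'1: "length ys' = Suc k" "\<forall>y\<in>set ys'. y \<ge> 1" using Suc.prems ys by auto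
  then have h1: "ys'!0 \<ge> 1" by (metis nth_mem zero_less_Suc)
  have "pmf (pathL p (Suc k) j) ys =
     (if y0 = j then pmf (kern p j) (ys'!0) * pmf (pathL p k (ys'!0)) ys' else 0)"
    unfolding ys by (rule pathL_pmf_step[OF assms(1) Suc.prems(1)])
  also have "\<dots> = (if y0 = j then p j (ys'!0) * (\<Prod>m<k. p (ys'!m) (ys'!Suc m)) else 0)"
    using Suc.IH[OF h1 ys'1] h1 stoch_kern_pmf[OF assms(1) Suc.prems(1)] by auto
  also have "\<dots> = (if ys ! 0 = j then 1 else 0) * (\<Prod>m<Suc k. p (ys!m) (ys!Suc m))"
    unfolding ys by (simp del: prod.lessThan_Suc add: prod.lessThan_Suc_shift)
  finally show ?case .
qed

lemma path_meas:
  assumes X_meas: "\<And>i m. X i m \<in> measurable M (count_space UNIV)"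
  shows "(\<lambda>\<omega>. map (\<lambda>m. X i m \<omega>) [0..<Suc k]) \<in> measurable M (count_space (UNIV :: nat list set))"
proof (subst measurable_count_space_eq2_countable, safe)
  fix a :: "nat list"
  have pre: "\<And>m c. {\<omega> \<in> space M. X i m \<omega> = c} \<in> sets M"
  proof -
    fix m c
    have "X i m -` {c} \<inter> space M \<in> sets M" using X_meas by (rule measurable_sets) simp
    then show "{\<omega> \<in> space M. X i m \<omega> = c} \<in> sets M" by (simp add: vimage_def Int_def conj_commute)
  qed
  have eq: "(\<lambda>\<omega>. map (\<lambda>m. X i m \<omega>) [0..<Suc k]) -` {a} \<inter> space M =
     (if length a = Suc k then {\<omega> \<in> space M. \<forall>m\<in>{..<Suc k}. X i m \<omega> = a ! m} else {})"
  proof -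
    have nth: "\<And>\<omega> m. m < Suc k \<Longrightarrow> map (\<lambda>m. X i m \<omega>) [0..<Suc k] ! m = X i m \<omega>"
      by (simp del: upt_Suc)
    have len: "\<And>\<omega>. length (map (\<lambda>m. X i m \<omega>) [0..<Suc k]) = Suc k" by simp
    have "\<And>\<omega>. map (\<lambda>m. X i m \<omega>) [0..<Suc k] = a \<longleftrightarrow> length a = Suc k \<and> (\<forall>m\<in>{..<Suc k}. X i m \<omega> = a ! m)"
      using nth len unfolding list_eq_iff_nth_eq by (metis lessThan_iff)
    then show ?thesis by auto
  qed
  show "(\<lambda>\<omega>. map (\<lambda>m. X i m \<omega>) [0..<Suc k]) -` {a} \<inter> space M \<in> sets M"
    unfolding eq using pre by (auto intro!: sets.sets_Collect_finite_All)
qed simp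

lemma bridge:
  assumes M_prob: "prob_space M"
    and X_meas: "\<And>i m. X i m \<in> measurable M (count_space UNIV)"
    and X_pos: "\<And>i m \<omega>. \<omega> \<in> space M \<Longrightarrow> X i m \<omega> \<ge> 1"
    and X_markov: "\<And>i k (x :: nat \<Rightarrow> nat). i \<ge> 1 \<Longrightarrow> (\<forall>m\<le>k. x m \<ge> 1) \<Longrightarrow>
          measure M {\<omega> \<in> space M. \<forall>m\<le>k. X i m \<omega> = x m}
            = (if x 0 = i then 1 else 0) * (\<Prod>m<k. p (x m) (x (Suc m)))"
    and st: "stoch p" and i1: "i \<ge> 1"
  shows "measure M {\<omega>\<in>space M. map (\<lambda>m. X i m \<omega>) [0..<Suc k] \<in> S} = measure_pmf.prob (pathL p k i) S"
proof -
  interpret prob_space M by (rule M_prob)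
  let ?P = "\<lambda>\<omega>. map (\<lambda>m. X i m \<omega>) [0..<Suc k]"
  have meas: "?P \<in> measurable M (count_space UNIV)" by (rule path_meas[OF X_meas])
  have D: "distr M (count_space UNIV) ?P = measure_pmf (pathL p k i)"
  proof (rule measure_eqI_countable[where A = UNIV])
    fix ys :: "nat list"
    have "emeasure (distr M (count_space UNIV) ?P) {ys} = emeasure M (?P -` {ys} \<inter> space M)"
      using meas by (simp add: emeasure_distr)
    also have "\<dots> = ennreal (pmf (pathL p k i) ys)"
    proof (cases "length ys = Suc k \<and> (\<forall>y\<in>set ys. y \<ge> 1)")
      case True
      have eq: "?P -` {ys} \<inter> space M = {\<omega> \<in> space M. \<forall>m\<le>k. X i m \<omega> = (\<lambda>m. ys ! m) m}"
      proof -
        have nth: "\<And>\<omega> m. m < Suc k \<Longrightarrow> ?P \<omega> ! m = X i m \<omega>" by (simp del: upt_Suc)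
        have "\<And>\<omega>. ?P \<omega> = ys \<longleftrightarrow> (\<forall>m<Suc k. X i m \<omega> = ys ! m)"
          using True nth by (auto simp: list_eq_iff_nth_eq simp del: upt_Suc)
        then show ?thesis by (auto simp: less_Suc_eq_le)
      qed
      have x1: "\<forall>m\<le>k. (\<lambda>m. ys ! m) m \<ge> 1" using True by (auto simp: less_Suc_eq_le[symmetric])
      have "emeasure M (?P -` {ys} \<inter> space M) = ennreal (measure M (?P -` {ys} \<inter> space M))"
        by (simp add: emeasure_eq_measure)
      also have "measure M (?P -` {ys} \<inter> space M) = pmf (pathL p k i) ys"
        unfolding eq X_markov[OF i1 x1] using pathL_pmf[OF st i1] True by simp
      finally show ?thesis .
    next
      case False
      have "?P -` {ys} \<inter> space M = {}" using False X_pos by auto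
      moreover have "ys \<notin> set_pmf (pathL p k i)" using False pathL_set[OF st i1] by blast
      ultimately show ?thesis by (simp add: set_pmf_eq)
    qed
    also have "\<dots> = emeasure (measure_pmf (pathL p k i)) {ys}" by (simp add: emeasure_pmf_single)
    finally show "emeasure (distr M (count_space UNIV) ?P) {ys} = emeasure (measure_pmf (pathL p k i)) {ys}" .
  qed auto
  have "measure M {\<omega>\<in>space M. ?P \<omega> \<in> S} = measure (distr M (count_space UNIV) ?P) S"
    using meas by (subst measure_distr) (auto simp: vimage_def Int_def conj_commute)
  then show ?thesis by (simp only: D)
qed

lemma prob_bind_pmf:
  "measure_pmf.prob (bind_pmf N f) S = measure_pmf.expectation N (\<lambda>x. measure_pmf.prob (f x) S)"
proof -
  have int: "integrable (measure_pmf N) (\<lambda>x. measure_pmf.prob (f x) S)"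
    by (rule measure_pmf.integrable_const_bound[where B=1]) auto
  have "ennreal (measure_pmf.prob (bind_pmf N f) S) = emeasure (measure_pmf (bind_pmf N f)) S"
    by (simp add: measure_pmf.emeasure_eq_measure)
  also have "\<dots> = (\<integral>\<^sup>+ x. emeasure (measure_pmf (f x)) S \<partial>measure_pmf N)"
    by (rule emeasure_bind_pmf)
  also have "\<dots> = (\<integral>\<^sup>+ x. ennreal (measure_pmf.prob (f x) S) \<partial>measure_pmf N)"
    by (simp add: measure_pmf.emeasure_eq_measure)
  also have "\<dots> = ennreal (measure_pmf.expectation N (\<lambda>x. measure_pmf.prob (f x) S))"
    using int by (intro nn_integral_eq_integral) auto
  finally show ?thesis by (simp add: ennreal_inj integral_nonneg)
qed

definition hitAB :: "nat set \<Rightarrow> nat set \<Rightarrow> nat list \<Rightarrow> bool" where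
  "hitAB A B ys \<longleftrightarrow> (\<exists>t<length ys. ys!t \<in> A \<and> (\<forall>s<t. ys!s \<notin> B))"

lemma hitAB_Cons: "hitAB A B (y # ys) \<longleftrightarrow> y \<in> A \<or> (y \<notin> B \<and> hitAB A B ys)"
  unfolding hitAB_def
proof safe
  fix t assume t: "t < length (y # ys)" "(y # ys) ! t \<in> A" "\<forall>s<t. (y # ys) ! s \<notin> B" "y \<notin> A"
  then obtain t' where t': "t = Suc t'" by (cases t) auto
  show "\<exists>t<length ys. ys ! t \<in> A \<and> (\<forall>s<t. ys ! s \<notin> B)"
    using t t' by (intro exI[of _ t']) auto
  show "y \<in> B \<Longrightarrow> False" using t t' by (metis nth_Cons_0 zero_less_Suc)
next
  show "y \<in> A \<Longrightarrow> \<exists>t<length (y # ys). (y # ys) ! t \<in> A \<and> (\<forall>s<t. (y # ys) ! s \<notin> B)"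
    by (intro exI[of _ 0]) auto
next
  fix t assume "y \<notin> B" "t < length ys" "ys ! t \<in> A" "\<forall>s<t. ys ! s \<notin> B"
  then show "\<exists>t<length (y # ys). (y # ys) ! t \<in> A \<and> (\<forall>s<t. (y # ys) ! s \<notin> B)"
    by (intro exI[of _ "Suc t"]) (auto simp: less_Suc_eq_0_disj)
qed

lemma hitAB_Nil: "\<not> hitAB A B []" by (simp add: hitAB_def)

fun hk :: "(nat \<Rightarrow> nat \<Rightarrow> real) \<Rightarrow> nat set \<Rightarrow> nat set \<Rightarrow> nat \<Rightarrow> nat \<Rightarrow> real" where
  "hk p A B 0 j = (if j \<in> A then 1 else 0)"
| "hk p A B (Suc k) j = (if j \<in> A then 1 else if j \<in> B then 0
     else measure_pmf.expectation (kern p j) (hk p A B k))"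

lemma hk_prob:
  assumes "stoch p" "j \<ge> 1"
  shows "measure_pmf.prob (pathL p k j) {ys. hitAB A B ys} = hk p A B k j"
  using assms(2)
proof (induction k arbitrary: j)
  case 0
  then show ?case by (simp add: hitAB_Cons hitAB_Nil)
next
  case (Suc k)
  have "measure_pmf.prob (pathL p (Suc k) j) {ys. hitAB A B ys}
     = measure_pmf.expectation (kern p j) (\<lambda>l. measure_pmf.prob (pathL p k l) (Cons j -` {ys. hitAB A B ys}))"
    by (simp add: prob_bind_pmf measure_map_pmf)
  also have "\<dots> = measure_pmf.expectation (kern p j) (\<lambda>l. if j \<in> A then 1 else if j \<in> B then 0 else hk p A B k l)"
  proof (rule pmf_integral_cong)
    fix l assume "l \<in> set_pmf (kern p j)"
    then have l1: "l \<ge> 1" using stoch_kern_set[OF assms(1) Suc.prems] by auto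
    have "Cons j -` {ys. hitAB A B ys} = (if j \<in> A then UNIV else if j \<in> B then {} else {ys. hitAB A B ys})"
      by (auto simp: hitAB_Cons)
    then show "measure_pmf.prob (pathL p k l) (Cons j -` {ys. hitAB A B ys}) =
      (if j \<in> A then 1 else if j \<in> B then 0 else hk p A B k l)"
      using Suc.IH[OF l1] by simp
  qed
  also have "\<dots> = hk p A B (Suc k) j" by simp
  finally show ?case .
qed

lemma hk_bounds: "0 \<le> hk p A B k j \<and> hk p A B k j \<le> 1"
proof (induction k arbitrary: j)
  case 0 then show ?case by simp
next
  case (Suc k)
  have int: "integrable (measure_pmf (kern p j)) (hk p A B k)"
    by (rule measure_pmf.integrable_const_bound[where B=1]) (use Suc.IH in auto)
  have "measure_pmf.expectation (kern p j) (hk p A B k) \<le> measure_pmf.expectation (kern p j) (\<lambda>_. 1)"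
    using Suc.IH int by (intro integral_mono) auto
  moreover have "0 \<le> measure_pmf.expectation (kern p j) (hk p A B k)"
    using Suc.IH by (intro Bochner_Integration.integral_nonneg) auto
  ultimately show ?case by simp
qed

lemma hk_int: "integrable (measure_pmf N) (hk p A B k)"
  by (rule measure_pmf.integrable_const_bound[where B=1]) (use hk_bounds in auto)

lemma hk_mono: "hk p A B k j \<le> hk p A B (Suc k) j"
proof (induction k arbitrary: j)
  case 0 then show ?case using hk_bounds[of p A B "Suc 0" j] by auto
next
  case (Suc k)
  have "measure_pmf.expectation (kern p j) (hk p A B k) \<le> measure_pmf.expectation (kern p j) (hk p A B (Suc k))"
    using Suc.IH by (intro integral_mono hk_int) auto
  then show ?case by simp
qed

lemma hk_B: "j \<in> B \<Longrightarrow> j \<notin> A \<Longrightarrow> hk p A B k j = 0"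
  by (cases k) auto

definition HH :: "(nat \<Rightarrow> nat \<Rightarrow> real) \<Rightarrow> nat set \<Rightarrow> nat set \<Rightarrow> nat \<Rightarrow> real" where
  "HH p A B j = (SUP k. hk p A B k j)"

lemma HH_upper: "hk p A B k j \<le> HH p A B j"
  unfolding HH_def by (rule cSUP_upper) (auto intro!: bdd_aboveI[of _ 1] simp: hk_bounds)

lemma HH_bounds: "0 \<le> HH p A B j \<and> HH p A B j \<le> 1"
proof
  show "0 \<le> HH p A B j" using HH_upper[of p A B 0 j] hk_bounds[of p A B 0 j] by linarith
  show "HH p A B j \<le> 1" unfolding HH_def by (rule cSUP_least) (auto simp: hk_bounds)
qed

lemma HH_int: "integrable (measure_pmf N) (HH p A B)"
  by (rule measure_pmf.integrable_const_bound[where B=1]) (use HH_bounds in auto)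

lemma HH_B: "j \<in> B \<Longrightarrow> j \<notin> A \<Longrightarrow> HH p A B j = 0"
  unfolding HH_def by (simp add: hk_B)

lemma HH_le_int:
  assumes "j \<notin> A" "j \<notin> B"
  shows "HH p A B j \<le> measure_pmf.expectation (kern p j) (HH p A B)"
  unfolding HH_def[of p A B j]
proof (rule cSUP_least)
  fix k
  show "hk p A B k j \<le> measure_pmf.expectation (kern p j) (HH p A B)"
  proof (cases k)
    case 0
    then show ?thesis using assms HH_bounds by (simp add: integral_nonneg)
  next
    case (Suc k')
    have "measure_pmf.expectation (kern p j) (hk p A B k') \<le> measure_pmf.expectation (kern p j) (HH p A B)"
      by (intro integral_mono hk_int HH_int HH_upper)
    then show ?thesis using Suc assms by simp
  qed
qed simp

lemma compare:
  assumes st: "stoch p"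
    and V0: "\<And>j. 0 \<le> V j" and VC: "\<And>j. V j \<le> C"
    and VA: "\<And>j. j \<in> A \<Longrightarrow> 1 \<le> V j"
    and Vsup: "\<And>j. j \<ge> 1 \<Longrightarrow> j \<notin> A \<Longrightarrow> j \<notin> B \<Longrightarrow>
        HH p A B j \<le> V j \<or> measure_pmf.expectation (kern p j) V \<le> V j"
    and j1: "j \<ge> 1"
  shows "HH p A B j \<le> V j"
proof -
  have "\<forall>j\<ge>1. hk p A B k j \<le> V j" for k
  proof (induction k)
    case 0 then show ?case using VA V0 by simp
  next
    case (Suc k)
    show ?case
    proof (intro allI impI)
      fix j :: nat assume j1: "j \<ge> 1"
      show "hk p A B (Suc k) j \<le> V j"
      proof (cases "j \<in> A \<or> j \<in> B")
        case True then show ?thesis using VA V0 by auto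
      next
        case False
        have disj: "HH p A B j \<le> V j \<or> measure_pmf.expectation (kern p j) V \<le> V j"
          using Vsup[OF j1] False by blast
        from disj show ?thesis
        proof
          assume "HH p A B j \<le> V j"
          then show ?thesis using HH_upper[of p A B "Suc k" j] by linarith
        next
          assume le: "measure_pmf.expectation (kern p j) V \<le> V j"
          have intV: "integrable (measure_pmf (kern p j)) V"
            by (rule measure_pmf.integrable_const_bound[where B=C]) (use V0 VC in auto)
          have "measure_pmf.expectation (kern p j) (hk p A B k) \<le> measure_pmf.expectation (kern p j) V"
          proof (rule integral_mono_AE[OF hk_int intV])
            show "AE x in measure_pmf (kern p j). hk p A B k x \<le> V x"
              using Suc.IH stoch_kern_set[OF st j1] by (auto simp: AE_measure_pmf_iff)
          qed
          then show ?thesis using False le by simp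
        qed
      qed
    qed
  qed
  then have "\<And>k. hk p A B k j \<le> V j" using j1 by auto
  then show ?thesis unfolding HH_def by (intro cSUP_least) auto
qed

lemma path_bound:
  assumes st: "stoch p"
    and HHf: "\<And>l. l \<ge> 1 \<Longrightarrow> HH p A B l \<le> f l + M" and M0: "M \<ge> 0"
    and f01: "\<And>l. 0 \<le> f l \<and> f l \<le> 1"
    and R0: "R \<ge> 0"
  shows "j \<ge> 1 \<Longrightarrow> ys \<in> set_pmf (pathL p k j) \<Longrightarrow> last ys \<in> B \<Longrightarrow> (\<forall>y\<in>set ys. y \<notin> A) \<Longrightarrow>
     (\<forall>y\<in>set ys. measure_pmf.expectation (kern p y) f \<le> R) \<Longrightarrow>
     HH p A B j \<le> real (Suc k) * R + (1 - pmf (pathL p k j) ys) * M"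
proof (induction k arbitrary: j ys)
  case 0
  then have ys: "ys = [j]" by simp
  then show ?case using 0 HH_B[of j B A p] R0 by (simp add: pmf_return)
next
  case (Suc k)
  from Suc.prems(2) obtain l ys' where l: "l \<in> set_pmf (kern p j)" and ys': "ys' \<in> set_pmf (pathL p k l)"
    and ys: "ys = j # ys'" by auto
  have l1: "l \<ge> 1" using stoch_kern_set[OF st Suc.prems(1)] l by auto
  have ys'0: "ys' ! 0 = l" and ys'ne: "ys' \<noteq> []" using pathL_set[OF st l1 ys'] by auto
  have w: "pmf (pathL p (Suc k) j) ys = pmf (kern p j) l * pmf (pathL p k l) ys'"
    unfolding ys using pathL_pmf_step[OF st Suc.prems(1)] ys'0 by simp
  have wle: "pmf (pathL p (Suc k) j) ys \<le> 1" by (rule pmf_le_1)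
  show ?case
  proof (cases "j \<in> B")
    case True
    have "j \<notin> A" using Suc.prems(4) ys by auto
    then have "HH p A B j = 0" using True HH_B by blast
    moreover have "0 \<le> real (Suc (Suc k)) * R + (1 - pmf (pathL p (Suc k) j) ys) * M"
      using R0 M0 wle by simp
    ultimately show ?thesis by simp
  next
    case False
    have jA: "j \<notin> A" using Suc.prems(4) ys by auto
    have IH: "HH p A B l \<le> real (Suc k) * R + (1 - pmf (pathL p k l) ys') * M"
      using Suc.IH[OF l1 ys'] Suc.prems(3-5) ys ys'ne by auto
    let ?q = "pmf (kern p j) l"
    let ?c = "HH p A B l - f l - M"
    have intf: "integrable (measure_pmf (kern p j)) f"
      by (rule measure_pmf.integrable_const_bound[where B=1]) (use f01 in auto)
    have intI: "integrable (measure_pmf (kern p j)) (indicator {l} :: nat \<Rightarrow> real)"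
      by (rule measure_pmf.integrable_const_bound[where B=1]) (auto simp: indicator_def)
    have intg: "integrable (measure_pmf (kern p j)) (\<lambda>x. f x + M + ?c * indicator {l} x)"
      by (intro Bochner_Integration.integrable_add intf) (auto intro: intI)
    have "HH p A B j \<le> measure_pmf.expectation (kern p j) (HH p A B)"
      by (rule HH_le_int[OF jA False])
    also have "\<dots> \<le> measure_pmf.expectation (kern p j) (\<lambda>x. f x + M + ?c * indicator {l} x)"
    proof (rule integral_mono_AE[OF HH_int intg])
      show "AE x in measure_pmf (kern p j). HH p A B x \<le> f x + M + ?c * indicator {l} x"
        using HHf stoch_kern_set[OF st Suc.prems(1)] by (auto simp: AE_measure_pmf_iff indicator_def)
    qed
    also have "\<dots> = measure_pmf.expectation (kern p j) f + M + ?c * ?q"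
      using intf intI by (simp add: measure_pmf_single)
    also have "\<dots> \<le> R + M + ?c * ?q"
      using Suc.prems(5) ys by auto
    also have "\<dots> \<le> R + M + (HH p A B l - M) * ?q"
      using f01[of l] pmf_nonneg[of "kern p j" l] by (simp add: algebra_simps mult_left_mono)
    also have "\<dots> \<le> R + M + (real (Suc k) * R - pmf (pathL p k l) ys' * M) * ?q"
      using IH pmf_nonneg[of "kern p j" l] by (intro add_left_mono mult_right_mono) (auto simp: algebra_simps)
    also have "\<dots> \<le> real (Suc (Suc k)) * R + (1 - pmf (pathL p (Suc k) j) ys) * M"
    proof -
      have "?q * (real (Suc k) * R) \<le> real (Suc k) * R"
        using pmf_le_1[of "kern p j" l] R0 by (simp add: mult_left_le_one_le)
      then show ?thesis unfolding w by (simp add: algebra_simps)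
    qed
    finally show ?thesis .
  qed
qed

definition fL :: "real \<Rightarrow> real \<Rightarrow> nat \<Rightarrow> real" where
  "fL b L l = min 1 ((real l / L) powr b)"

lemma fL_01: "0 \<le> fL b L l \<and> fL b L l \<le> 1"
  unfolding fL_def by auto

lemma fL_int: "integrable (measure_pmf N) (fL b L)"
  by (rule measure_pmf.integrable_const_bound[where B=1]) (use fL_01 in auto)

lemma fL_A: "L > 0 \<Longrightarrow> b > 0 \<Longrightarrow> L \<le> real l \<Longrightarrow> fL b L l = 1"
proof -
  assume a: "L > 0" "b > 0" "L \<le> real l"
  have "1 \<le> real l / L" using a by simp
  then have "1 \<le> (real l / L) powr b" by (rule ge_one_powr_ge_zero) (use a in simp)
  then show ?thesis unfolding fL_def by simp
qed

lemma fL_anti: "0 < L' \<Longrightarrow> L' \<le> L \<Longrightarrow> b > 0 \<Longrightarrow> fL b L l \<le> fL b L' l"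
  unfolding fL_def
  by (intro min.mono order.refl powr_mono2) (auto intro: divide_left_mono)

lemma fL_lim: "b > 0 \<Longrightarrow> (\<lambda>n. measure_pmf.expectation N (fL b (real n))) \<longlonglongrightarrow> 0"
proof -
  assume b: "b > 0"
  have pt: "(\<lambda>n. fL b (real n) l) \<longlonglongrightarrow> 0" for l
  proof -
    have "(\<lambda>n. (real l / real n) powr b) \<longlonglongrightarrow> 0"
      using b by (intro tendsto_zero_powrI lim_const_over_n) auto
    then have "(\<lambda>n. min 1 ((real l / real n) powr b)) \<longlonglongrightarrow> min 1 0"
      by (intro tendsto_min) auto
    then show ?thesis by (simp add: fL_def)
  qed
  have "(\<lambda>n. measure_pmf.expectation N (fL b (real n))) \<longlonglongrightarrow> measure_pmf.expectation N (\<lambda>_. 0::real)"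
    by (rule integral_dominated_convergence[where w="\<lambda>_. 1"]) (auto simp: pt fL_01 abs_le_iff)
  then show ?thesis by simp
qed

lemma finite_pos_lower:
  fixes g :: "'a \<Rightarrow> real"
  assumes "finite S" "\<And>j. j \<in> S \<Longrightarrow> 0 < g j"
  shows "\<exists>w>0. w \<le> 1 \<and> (\<forall>j\<in>S. w \<le> g j)"
proof (intro exI conjI)
  let ?w = "Min (insert 1 (g ` S))"
  show "0 < ?w" using assms by (subst Min_gr_iff) auto
  show "?w \<le> 1" using assms by auto
  show "\<forall>j\<in>S. ?w \<le> g j" using assms by auto
qed

lemma markov_main:
  fixes p :: "nat \<Rightarrow> nat \<Rightarrow> real" and \<beta>0 :: real and x0 K :: nat
  assumes st: "stoch p" and b0: "\<beta>0 > 0"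
    and super: "\<And>j L. j \<ge> x0 \<Longrightarrow> L > 0 \<Longrightarrow> measure_pmf.expectation (kern p j) (fL \<beta>0 L) \<le> fL \<beta>0 L j"
    and reach: "\<And>j. j \<ge> 1 \<Longrightarrow> \<exists>k ys. ys \<in> set_pmf (pathL p k j) \<and> last ys \<le> K"
    and eta: "\<eta> > 0"
  shows "\<exists>L0. \<forall>L\<ge>L0. \<forall>j\<ge>1. HH p {l. L \<le> real l} {1..K} j \<le> fL \<beta>0 L j + \<eta>"
proof -
  define S' where "S' = {j. 1 \<le> j \<and> j < x0 \<and> K < j}"
  have finS: "finite S'" unfolding S'_def by auto
  have "\<forall>j\<in>S'. \<exists>kys. snd kys \<in> set_pmf (pathL p (fst kys) j) \<and> last (snd kys) \<le> K"
    using reach unfolding S'_def by auto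
  then obtain kys where kys: "\<And>j. j \<in> S' \<Longrightarrow> snd (kys j) \<in> set_pmf (pathL p (fst (kys j)) j) \<and> last (snd (kys j)) \<le> K"
    by metis
  define kk where "kk j = fst (kys j)" for j
  define ys where "ys j = snd (kys j)" for j
  have P: "\<And>j. j \<in> S' \<Longrightarrow> ys j \<in> set_pmf (pathL p (kk j) j)" and Pl: "\<And>j. j \<in> S' \<Longrightarrow> last (ys j) \<le> K"
    using kys unfolding kk_def ys_def by auto
  obtain w where w0: "w > 0" and w1: "w \<le> 1" and wle: "\<And>j. j \<in> S' \<Longrightarrow> w \<le> pmf (pathL p (kk j) j) (ys j)"
    using finite_pos_lower[OF finS, of "\<lambda>j. pmf (pathL p (kk j) j) (ys j)"] P pmf_positive by metis
  define T where "T = Max (insert 1 ((\<lambda>j. real (Suc (kk j))) ` S'))"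
  have T1: "T \<ge> 1" and Tle: "\<And>j. j \<in> S' \<Longrightarrow> real (Suc (kk j)) \<le> T"
    unfolding T_def using finS by auto
  define Y where "Y = (\<Union>j\<in>S'. set (ys j))"
  have finY: "finite Y" unfolding Y_def using finS by auto
  define Ymax where "Ymax = Max (insert 0 Y)"
  have Ymax: "\<And>y. y \<in> Y \<Longrightarrow> y \<le> Ymax" unfolding Ymax_def using finY by auto
  define \<eta>' where "\<eta>' = \<eta> * w / T"
  have eta': "\<eta>' > 0" unfolding \<eta>'_def using eta w0 T1 by auto
  have "\<forall>y\<in>Y. eventually (\<lambda>n. measure_pmf.expectation (kern p y) (fL \<beta>0 (real n)) < \<eta>') sequentially"
    using fL_lim[OF b0] eta' by (auto simp: order_tendsto_iff)
  then have "eventually (\<lambda>n. \<forall>y\<in>Y. measure_pmf.expectation (kern p y) (fL \<beta>0 (real n)) < \<eta>') sequentially"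
    by (rule eventually_ball_finite[OF finY])
  then obtain N where N: "\<And>n y. n \<ge> N \<Longrightarrow> y \<in> Y \<Longrightarrow> measure_pmf.expectation (kern p y) (fL \<beta>0 (real n)) < \<eta>'"
    by (auto simp: eventually_sequentially)
  define L0 where "L0 = max (real (Suc N)) (max (real x0) (max (real K + 1) (real Ymax + 1)))"
  show ?thesis
  proof (intro exI[of _ L0] allI impI)
    fix L :: real assume L: "L \<ge> L0"
    fix j :: nat assume j1: "j \<ge> 1"
    define A where "A = {l. L \<le> real l}"
    define B where "B = {1..K}"
    have Lpos: "L > 0" using L unfolding L0_def by auto
    have LN: "L \<ge> real N" "real N > 0 \<or> N = 0" using L unfolding L0_def by auto
    define M where "M = Max (insert 0 (HH p A B ` S'))"
    have M0: "M \<ge> 0" unfolding M_def using finS by auto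
    have MS: "\<And>j. j \<in> S' \<Longrightarrow> HH p A B j \<le> M" unfolding M_def using finS by auto
    have Min: "M = 0 \<or> (\<exists>j\<in>S'. M = HH p A B j)"
      unfolding M_def using finS Max_in[of "insert 0 (HH p A B ` S')"] by auto
    have HHb: "HH p A B j \<le> fL \<beta>0 L j + M" if j1: "j \<ge> 1" for j
    proof (rule compare[OF st _ _ _ _ j1, where C = "1 + M"])
      show "\<And>j. 0 \<le> fL \<beta>0 L j + M" using fL_01 M0 by (simp add: add_nonneg_nonneg)
      show "\<And>j. fL \<beta>0 L j + M \<le> 1 + M" using fL_01 by simp
      show "\<And>j. j \<in> A \<Longrightarrow> 1 \<le> fL \<beta>0 L j + M" using fL_A[OF Lpos b0] M0 unfolding A_def by simp
      fix j :: nat assume j: "j \<ge> 1" "j \<notin> A" "j \<notin> B"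
      show "HH p A B j \<le> fL \<beta>0 L j + M \<or>
          measure_pmf.expectation (kern p j) (\<lambda>j. fL \<beta>0 L j + M) \<le> fL \<beta>0 L j + M"
      proof (cases "j < x0")
        case True
        then have "j \<in> S'" using j unfolding S'_def B_def by auto
        then show ?thesis using MS fL_01[of \<beta>0 L j] by fastforce
      next
        case False
        have "measure_pmf.expectation (kern p j) (\<lambda>j. fL \<beta>0 L j + M) =
            measure_pmf.expectation (kern p j) (fL \<beta>0 L) + M"
          using fL_int by simp
        also have "\<dots> \<le> fL \<beta>0 L j + M" using super[of j L] False Lpos by simp
        finally show ?thesis by blast
      qed
    qed
    have pathb: "HH p A B j \<le> T * \<eta>' + (1 - w) * M" if jS: "j \<in> S'" for j
    proof -
      have j1': "j \<ge> 1" using jS unfolding S'_def by auto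
      have ysS: "ys j \<in> set_pmf (pathL p (kk j) j)" by (rule P[OF jS])
      have props: "length (ys j) = Suc (kk j) \<and> ys j ! 0 = j \<and> (\<forall>y\<in>set (ys j). y \<ge> 1)"
        by (rule pathL_set[OF st j1' ysS])
      have ne: "ys j \<noteq> []" using props by auto
      have lastB: "last (ys j) \<in> B" using Pl[OF jS] props ne unfolding B_def by auto
      have notA: "\<forall>y\<in>set (ys j). y \<notin> A"
      proof
        fix y assume y: "y \<in> set (ys j)"
        then have "y \<in> Y" using jS unfolding Y_def by auto
        then have "real y \<le> real Ymax" using Ymax by simp
        then show "y \<notin> A" using L unfolding A_def L0_def by auto
      qed
      have Rb: "\<forall>y\<in>set (ys j). measure_pmf.expectation (kern p y) (fL \<beta>0 L) \<le> \<eta>'"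
      proof
        fix y assume y: "y \<in> set (ys j)"
        then have yY: "y \<in> Y" using jS unfolding Y_def by auto
        have NSuc: "real (Suc N) \<le> L" using L unfolding L0_def by auto
        have "measure_pmf.expectation (kern p y) (fL \<beta>0 L) \<le> measure_pmf.expectation (kern p y) (fL \<beta>0 (real (Suc N)))"
          using NSuc b0 by (intro integral_mono fL_int fL_anti) auto
        also have "\<dots> < \<eta>'" using N[of "Suc N" y] yY by simp
        finally show "measure_pmf.expectation (kern p y) (fL \<beta>0 L) \<le> \<eta>'" by simp
      qed
      have "HH p A B j \<le> real (Suc (kk j)) * \<eta>' + (1 - pmf (pathL p (kk j) j) (ys j)) * M"
        by (rule path_bound[OF st HHb M0 fL_01 _ j1' ysS lastB notA Rb]) (use eta' in auto)
      also have "\<dots> \<le> T * \<eta>' + (1 - w) * M"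
        using Tle[OF jS] wle[OF jS] eta' M0 by (intro add_mono mult_right_mono) auto
      finally show ?thesis .
    qed
    have Mle: "M \<le> \<eta>"
    proof -
      have "M \<le> T * \<eta>' + (1 - w) * M"
        using Min pathb M0 w1 T1 eta' by (auto intro: add_nonneg_nonneg)
      then have "w * M \<le> T * \<eta>'" by (simp add: algebra_simps)
      also have "T * \<eta>' = w * \<eta>" unfolding \<eta>'_def using T1 by simp
      finally show ?thesis using w0 by simp
    qed
    show "HH p {l. L \<le> real l} {1..K} j \<le> fL \<beta>0 L j + \<eta>"
      using HHb[OF j1] Mle unfolding A_def B_def by simp
  qed
qed

lemma hit_lt_iff:
  fixes f :: "nat \<Rightarrow> nat"
  assumes dis: "A \<inter> B = {}"
  shows "hit_time f A < hit_time f B \<longleftrightarrow> (\<exists>t. f t \<in> A \<and> (\<forall>s<t. f s \<notin> B))"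
proof (cases "\<exists>k. f k \<in> A")
  case False
  then show ?thesis unfolding hit_time_def by auto
next
  case True
  define t0 where "t0 = (LEAST k. f k \<in> A)"
  have t0A: "f t0 \<in> A" unfolding t0_def using True by (metis LeastI)
  have hA: "hit_time f A = enat t0" unfolding hit_time_def t0_def using True by simp
  show ?thesis
  proof
    assume lt: "hit_time f A < hit_time f B"
    show "\<exists>t. f t \<in> A \<and> (\<forall>s<t. f s \<notin> B)"
    proof (intro exI conjI allI impI)
      show "f t0 \<in> A" by (rule t0A)
      fix s assume s: "s < t0"
      show "f s \<notin> B"
      proof
        assume fs: "f s \<in> B"
        then have "hit_time f B = enat (LEAST k. f k \<in> B)" unfolding hit_time_def by auto
        moreover have "(LEAST k. f k \<in> B) \<le> s" using fs by (rule Least_le)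
        ultimately show False using lt hA s by simp
      qed
    qed
  next
    assume "\<exists>t. f t \<in> A \<and> (\<forall>s<t. f s \<notin> B)"
    then obtain t where tA: "f t \<in> A" and tB: "\<forall>s<t. f s \<notin> B" by blast
    have t0t: "t0 \<le> t" unfolding t0_def using tA by (rule Least_le)
    show "hit_time f A < hit_time f B"
    proof (cases "\<exists>k. f k \<in> B")
      case False
      then show ?thesis unfolding hit_time_def using True by simp
    next
      case TB: True
      define sB where "sB = (LEAST k. f k \<in> B)"
      have sBB: "f sB \<in> B" unfolding sB_def using TB by (metis LeastI)
      have "\<not> sB < t" using tB sBB by auto
      moreover have "sB \<noteq> t0" using sBB t0A dis by auto
      ultimately have "t0 < sB" using t0t by simp
      then show ?thesis using hA TB unfolding hit_time_def sB_def by simp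
    qed
  qed
qed

lemma hitAB_map: "hitAB A B (map f [0..<Suc k]) \<longleftrightarrow> (\<exists>t<Suc k. f t \<in> A \<and> (\<forall>s<t. f s \<notin> B))"
  unfolding hitAB_def by (auto simp del: upt_Suc)

lemma assemble:
  fixes p :: "nat \<Rightarrow> nat \<Rightarrow> real"
    and M :: "'a measure" and X :: "nat \<Rightarrow> nat \<Rightarrow> 'a \<Rightarrow> nat"
    and \<beta>0 \<epsilon> :: real and K :: nat
  assumes p_nonneg: "\<And>n k. p n k \<ge> 0"
    and p_sum: "\<And>n. n \<ge> 1 \<Longrightarrow> (\<lambda>k. p n (Suc k)) sums 1"
    and M_prob: "prob_space M"
    and X_meas: "\<And>i m. X i m \<in> measurable M (count_space UNIV)"
    and X_pos: "\<And>i m \<omega>. \<omega> \<in> space M \<Longrightarrow> X i m \<omega> \<ge> 1"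
    and X_markov: "\<And>i k (x :: nat \<Rightarrow> nat). i \<ge> 1 \<Longrightarrow> (\<forall>m\<le>k. x m \<ge> 1) \<Longrightarrow>
          measure M {\<omega> \<in> space M. \<forall>m\<le>k. X i m \<omega> = x m}
            = (if x 0 = i then 1 else 0) * (\<Prod>m<k. p (x m) (x (Suc m)))"
    and b0: "0 < \<beta>0"
    and K_reach: "\<And>n. n \<ge> 1 \<Longrightarrow> measure M {\<omega> \<in> space M. \<exists>m. X n m \<omega> \<le> K} > 0"
    and \<epsilon>_pos: "\<epsilon> > 0"
    and analytic: "\<exists>x0::nat. \<forall>j\<ge>x0. summable (\<lambda>k. p j (Suc k) * real (Suc k) powr \<beta>0) \<and>
          (\<Sum>k. p j (Suc k) * real (Suc k) powr \<beta>0) \<le> real j powr \<beta>0"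
  shows "\<exists>n0. \<forall>n\<ge>n0. \<forall>i::nat. 1 \<le> i \<and> real i \<le> \<epsilon>\<^sup>2 * real n \<longrightarrow>
           measure M {\<omega> \<in> space M.
              hit_time (\<lambda>k. X i k \<omega>) {m. real m \<ge> \<epsilon> * real n}
                < hit_time (\<lambda>k. X i k \<omega>) {1..K}} \<le> 2 * \<epsilon> powr \<beta>0"
proof -
  interpret prob_space M by (rule M_prob)
  have st: "stoch p" unfolding stoch_def using p_nonneg p_sum by auto
  obtain x0 :: nat where x0: "\<And>j. j \<ge> x0 \<Longrightarrow> summable (\<lambda>k. p j (Suc k) * real (Suc k) powr \<beta>0) \<and>
          (\<Sum>k. p j (Suc k) * real (Suc k) powr \<beta>0) \<le> real j powr \<beta>0"
    using analytic by blast
  define x1 where "x1 = max x0 1"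
  have super: "measure_pmf.expectation (kern p j) (fL \<beta>0 L) \<le> fL \<beta>0 L j" if j: "j \<ge> x1" and L: "L > 0" for j L
  proof -
    have j1: "j \<ge> 1" using j unfolding x1_def by auto
    have sj: "summable (\<lambda>k. p j (Suc k) * real (Suc k) powr \<beta>0)"
      and lej: "(\<Sum>k. p j (Suc k) * real (Suc k) powr \<beta>0) \<le> real j powr \<beta>0" using x0[of j] j unfolding x1_def by auto
    have ps: "(\<lambda>k. p j (Suc k)) sums 1" using p_sum j1 by auto
    have sp: "summable (\<lambda>k. p j (Suc k))" using ps by (simp add: sums_summable)
    have sf: "summable (\<lambda>k. p j (Suc k) * fL \<beta>0 L (Suc k))"
    proof (rule summable_comparison_test'[OF sp, of 0])
      fix k show "norm (p j (Suc k) * fL \<beta>0 L (Suc k)) \<le> p j (Suc k)"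
        using mult_left_le[of "fL \<beta>0 L (Suc k)" "p j (Suc k)"] fL_01[of \<beta>0 L "Suc k"] p_nonneg[of j "Suc k"] by (auto simp: abs_mult)
    qed
    have sfa: "summable (\<lambda>k. \<bar>p j (Suc k) * fL \<beta>0 L (Suc k)\<bar>)"
      using sf fL_01 p_nonneg by (simp add: abs_mult)
    have E: "measure_pmf.expectation (kern p j) (fL \<beta>0 L) = (\<Sum>k. p j (Suc k) * fL \<beta>0 L (Suc k))"
      by (rule kern_expect[of p j, OF p_nonneg ps sfa])
    have le1: "(\<Sum>k. p j (Suc k) * fL \<beta>0 L (Suc k)) \<le> (\<Sum>k. p j (Suc k))"
    proof (intro suminf_le sf sp)
      fix k show "p j (Suc k) * fL \<beta>0 L (Suc k) \<le> p j (Suc k)"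
        using mult_left_le[of "fL \<beta>0 L (Suc k)" "p j (Suc k)"] fL_01[of \<beta>0 L "Suc k"] p_nonneg[of j "Suc k"] by auto
    qed
    have sg: "summable (\<lambda>k. p j (Suc k) * real (Suc k) powr \<beta>0 / L powr \<beta>0)"
      using sj by (rule summable_divide)
    have le2: "(\<Sum>k. p j (Suc k) * fL \<beta>0 L (Suc k)) \<le> (\<Sum>k. p j (Suc k) * real (Suc k) powr \<beta>0 / L powr \<beta>0)"
    proof (intro suminf_le sf sg)
      fix k
      have "fL \<beta>0 L (Suc k) \<le> real (Suc k) powr \<beta>0 / L powr \<beta>0"
        unfolding fL_def using L by (simp add: powr_divide)
      then show "p j (Suc k) * fL \<beta>0 L (Suc k) \<le> p j (Suc k) * real (Suc k) powr \<beta>0 / L powr \<beta>0"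
        using mult_left_mono[OF _ p_nonneg[of j "Suc k"]] by (simp add: times_divide_eq_right[symmetric] del: times_divide_eq_right of_nat_Suc)
    qed
    also have "\<dots> = (\<Sum>k. p j (Suc k) * real (Suc k) powr \<beta>0) / L powr \<beta>0"
      using suminf_divide[OF sj, of "L powr \<beta>0"] by simp
    also have "\<dots> \<le> real j powr \<beta>0 / L powr \<beta>0" using lej L by (simp add: divide_right_mono)
    also have "\<dots> = (real j / L) powr \<beta>0" using L by (simp add: powr_divide)
    finally have le2': "(\<Sum>k. p j (Suc k) * fL \<beta>0 L (Suc k)) \<le> (real j / L) powr \<beta>0" .
    have one: "(\<Sum>k. p j (Suc k)) = 1" using ps sums_unique by metis
    show ?thesis unfolding E using le1 le2' one unfolding fL_def[of \<beta>0 L j] by simp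
  qed
  have reach: "\<exists>k ys. ys \<in> set_pmf (pathL p k j) \<and> last ys \<le> K" if j1: "j \<ge> 1" for j
  proof -
    have mpos: "measure M {\<omega> \<in> space M. \<exists>m. X j m \<omega> \<le> K} > 0" using K_reach[OF j1] .
    have "\<exists>m. measure M {\<omega> \<in> space M. X j m \<omega> \<le> K} \<noteq> 0"
    proof (rule ccontr)
      assume "\<not> ?thesis"
      then have z: "\<And>m. measure M {\<omega> \<in> space M. X j m \<omega> \<le> K} = 0" by auto
      have sets: "\<And>m. {\<omega> \<in> space M. X j m \<omega> \<le> K} \<in> sets M"
        using X_meas by (auto intro!: measurable_sets_Collect[where N="count_space UNIV"] simp: measurable_count_space_eq1 )
      have "measure M (\<Union>m. {\<omega> \<in> space M. X j m \<omega> \<le> K}) = 0"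
        using sets z by (intro measure_countably_zero) auto
      moreover have "(\<Union>m. {\<omega> \<in> space M. X j m \<omega> \<le> K}) = {\<omega> \<in> space M. \<exists>m. X j m \<omega> \<le> K}" by auto
      ultimately show False using mpos by simp
    qed
    then obtain m where m: "measure M {\<omega> \<in> space M. X j m \<omega> \<le> K} \<noteq> 0" by blast
    have eq: "{\<omega> \<in> space M. X j m \<omega> \<le> K} = {\<omega>\<in>space M. map (\<lambda>m. X j m \<omega>) [0..<Suc m] \<in> {ys. last ys \<le> K}}"
      by (simp add: last_map last_upt del: upt_Suc)
    have "measure_pmf.prob (pathL p m j) {ys. last ys \<le> K} \<noteq> 0"
      using m unfolding eq by (simp only: bridge[OF M_prob X_meas X_pos X_markov st j1]) simp
    then show ?thesis unfolding measure_pmf_zero_iff by blast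
  qed
  have eta: "\<epsilon> powr \<beta>0 > 0" using \<epsilon>_pos by simp
  obtain L0 where L0: "\<And>L j. L \<ge> L0 \<Longrightarrow> j \<ge> 1 \<Longrightarrow> HH p {l. L \<le> real l} {1..K} j \<le> fL \<beta>0 L j + \<epsilon> powr \<beta>0"
    using markov_main[OF st b0 super reach eta] by blast
  define n0 where "n0 = nat \<lceil>max L0 (real K + 1) / \<epsilon>\<rceil>"
  show ?thesis
  proof (intro exI[of _ n0] allI impI)
    fix n i :: nat assume n: "n \<ge> n0" and i: "1 \<le> i \<and> real i \<le> \<epsilon>\<^sup>2 * real n"
    have "max L0 (real K + 1) / \<epsilon> \<le> real n" using n unfolding n0_def by linarith
    then have Ln: "max L0 (real K + 1) \<le> \<epsilon> * real n" using \<epsilon>_pos by (simp add: field_simps)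
    define L where "L = \<epsilon> * real n"
    have LL0: "L \<ge> L0" and LK: "L \<ge> real K + 1" using Ln unfolding L_def by auto
    define A where "A = {l::nat. L \<le> real l}"
    define B where "B = {1..K}"
    have dis: "A \<inter> B = {}" unfolding A_def B_def using LK by auto
    define E where "E k = {\<omega>\<in>space M. map (\<lambda>m. X i m \<omega>) [0..<Suc k] \<in> {ys. hitAB A B ys}}" for k
    have Esets: "E k \<in> sets M" for k
    proof -
      have "(\<lambda>\<omega>. map (\<lambda>m. X i m \<omega>) [0..<Suc k]) -` {ys. hitAB A B ys} \<inter> space M \<in> sets M"
        by (rule measurable_sets[OF path_meas[OF X_meas]]) simp
      then show ?thesis unfolding E_def by (simp add: vimage_def Int_def conj_commute)
    qed
    have Einc: "incseq E"
    proof (rule incseq_SucI)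
      fix k show "E k \<subseteq> E (Suc k)" unfolding E_def mem_Collect_eq hitAB_map using less_SucI by blast
    qed
    have Eset: "{\<omega> \<in> space M. hit_time (\<lambda>k. X i k \<omega>) {m. real m \<ge> \<epsilon> * real n}
                < hit_time (\<lambda>k. X i k \<omega>) {1..K}} = (\<Union>k. E k)"
    proof -
      have Aeq: "{m. real m \<ge> \<epsilon> * real n} = A" unfolding A_def L_def by auto
      have "\<And>\<omega>. hit_time (\<lambda>k. X i k \<omega>) A < hit_time (\<lambda>k. X i k \<omega>) B \<longleftrightarrow> (\<exists>k. hitAB A B (map (\<lambda>m. X i m \<omega>) [0..<Suc k]))"
        unfolding hit_lt_iff[OF dis] hitAB_map by blast
      then show ?thesis unfolding Aeq E_def B_def[symmetric] by auto
    qed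
    have i1: "i \<ge> 1" using i by simp
    have Ek: "measure M (E k) \<le> HH p A B i" for k
    proof -
      have "measure M (E k) = hk p A B k i"
        unfolding E_def using bridge[OF M_prob X_meas X_pos X_markov st i1, of k "{ys. hitAB A B ys}"] hk_prob[OF st i1, of k A B]
        by (simp del: upt_Suc)
      then show ?thesis using HH_upper by simp
    qed
    have lim: "(\<lambda>k. measure M (E k)) \<longlonglongrightarrow> measure M (\<Union>k. E k)"
      using Esets Einc by (intro finite_Lim_measure_incseq) auto
    have "measure M (\<Union>k. E k) \<le> HH p A B i"
      using lim Ek by (intro LIMSEQ_le_const2) auto
    also have "\<dots> \<le> fL \<beta>0 L i + \<epsilon> powr \<beta>0" using L0[OF LL0 i1] unfolding A_def B_def .
    also have "fL \<beta>0 L i \<le> \<epsilon> powr \<beta>0"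
    proof -
      have Lp: "L > 0" using LK by simp
      have "real i / L \<le> \<epsilon>"
        using i Lp \<epsilon>_pos unfolding L_def by (simp add: divide_le_eq power2_eq_square mult.assoc)
      then have "(real i / L) powr \<beta>0 \<le> \<epsilon> powr \<beta>0" using b0 Lp by (intro powr_mono2) auto
      then show ?thesis unfolding fL_def by simp
    qed
    finally show "measure M {\<omega> \<in> space M. hit_time (\<lambda>k. X i k \<omega>) {m. real m \<ge> \<epsilon> * real n}
                < hit_time (\<lambda>k. X i k \<omega>) {1..K}} \<le> 2 * \<epsilon> powr \<beta>0"
      unfolding Eset by simp
  qed
qed

locale levym =
  fixes Lm :: "real measure"
  assumes Pi_sets: "sets Lm = sets borel"
    and Pi_pm1: "emeasure Lm {-1, 1} = 0"
    and Pi_levy: "(\<integral>\<^sup>+ x. ennreal (min 1 (x\<^sup>2)) \<partial>Lm) < \<infinity>"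
begin

lemma meas_Lm: "f \<in> borel_measurable borel \<Longrightarrow> f \<in> borel_measurable Lm"
  using measurable_cong_sets[OF Pi_sets refl, of borel] by blast

lemma space_Lm: "space Lm = UNIV"
  using sets_eq_imp_space_eq[OF Pi_sets] by simp

lemma sets_Lm: "A \<in> sets borel \<Longrightarrow> A \<in> sets Lm"
  using Pi_sets by simp

lemma int_min1: "integrable Lm (\<lambda>x. min 1 (x\<^sup>2))"
  by (rule integrableI_bounded) (use Pi_levy in \<open>auto intro!: meas_Lm\<close>)

lemma int_dom:
  fixes G :: "real \<Rightarrow> real"
  assumes "G \<in> borel_measurable borel" "\<And>x. \<bar>G x\<bar> \<le> C * min 1 (x\<^sup>2)"
  shows "integrable Lm G"
proof (rule Bochner_Integration.integrable_bound[of Lm "\<lambda>x. C * min 1 (x\<^sup>2)"])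
  show "integrable Lm (\<lambda>x. C * min 1 (x\<^sup>2))" using int_min1 by simp
  show "G \<in> borel_measurable Lm" using assms(1) by (rule meas_Lm)
  have "C \<ge> 0" using assms(2)[of 1] by simp
  then show "AE x in Lm. norm (G x) \<le> norm (C * min 1 (x\<^sup>2))" using assms(2) by auto
qed

lemma int_far:
  fixes G :: "real \<Rightarrow> real"
  assumes "G \<in> borel_measurable borel" "\<And>x. \<bar>G x\<bar> \<le> C" "\<And>x. \<bar>x\<bar> < \<delta> \<Longrightarrow> G x = 0" "\<delta> > 0"
  shows "integrable Lm G"
proof (rule int_dom[OF assms(1), of "C / min 1 (\<delta>\<^sup>2)"])
  fix x
  have C0: "C \<ge> 0" using assms(2)[of 0] by simp
  have m0: "min 1 (\<delta>\<^sup>2) > 0" using assms(4) by simp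
  show "\<bar>G x\<bar> \<le> C / min 1 (\<delta>\<^sup>2) * min 1 (x\<^sup>2)"
  proof (cases "\<bar>x\<bar> < \<delta>")
    case True then show ?thesis using assms(3) C0 m0 by simp
  next
    case False
    then have "\<delta>\<^sup>2 \<le> x\<^sup>2" using assms(4) by (metis abs_le_square_iff abs_of_pos not_less)
    then have "min 1 (\<delta>\<^sup>2) \<le> min 1 (x\<^sup>2)" by simp
    then have "1 \<le> min 1 (x\<^sup>2) / min 1 (\<delta>\<^sup>2)" using m0 by simp
    then have "C \<le> C * (min 1 (x\<^sup>2) / min 1 (\<delta>\<^sup>2))" using C0 by (metis mult.right_neutral mult_left_mono)
    then show ?thesis using assms(2)[of x] by simp
  qed
qed

lemma fin_far:
  assumes "\<delta> > 0"
  shows "emeasure Lm {x. \<delta> \<le> \<bar>x\<bar>} < \<infinity>"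
proof -
  have "integrable Lm (indicator {x. \<delta> \<le> \<bar>x\<bar>} :: real \<Rightarrow> real)"
    by (rule int_far[of _ 1 \<delta>]) (use assms in \<open>auto simp: indicator_def\<close>)
  then show ?thesis
    by (simp add: integrable_indicator_iff space_Lm)
qed

lemma Dsmall:
  assumes eps: "\<epsilon> > 0"
  shows "\<exists>\<tau>. 0 < \<tau> \<and> \<tau> \<le> 1/4 \<and> measure Lm {x. 1 - \<tau> < \<bar>x\<bar> \<and> \<bar>x\<bar> < 1 + \<tau>} < \<epsilon>"
proof -
  define A where "A m = {x::real. 1 - 1/(real m+4) < \<bar>x\<bar> \<and> \<bar>x\<bar> < 1 + 1/(real m + 4)}" for m :: nat
  have Asets: "A m \<in> sets Lm" for m unfolding A_def by (intro sets_Lm) measurable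
  have Asub: "A m \<subseteq> {x. 1/2 \<le> \<bar>x\<bar>}" for m
  proof
    fix x assume "x \<in> A m"
    then have h1: "1 - 1/(real m+4) < \<bar>x\<bar>" unfolding A_def by auto
    have h2: "1/(real m + 4) \<le> 1/4" by (simp add: field_simps)
    from h1 h2 have "1/2 \<le> \<bar>x\<bar>" by linarith
    then show "x \<in> {x. 1/2 \<le> \<bar>x\<bar>}" by simp
  qed
  have far: "emeasure Lm {x. 1/2 \<le> \<bar>x\<bar>} < \<infinity>" by (rule fin_far) simp
  have Afin: "emeasure Lm (A m) \<noteq> \<infinity>" for m
    using emeasure_mono[OF Asub[of m], of Lm] far sets_Lm[of "{x. 1/2 \<le> \<bar>x\<bar>}"] by (auto simp: top_unique)
  have anti: "antimono_on UNIV A"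
  proof (rule antimonoI)
    fix m n :: nat assume "m \<le> n"
    then have "1/(real n + 4) \<le> 1/(real m + 4)" by (simp add: frac_le)
    then show "A n \<subseteq> A m" unfolding A_def by auto
  qed
  have inter: "(\<Inter>m. A m) = {-1, 1}"
  proof
    show "{-1, 1} \<subseteq> (\<Inter>m. A m)" unfolding A_def by auto
    show "(\<Inter>m. A m) \<subseteq> {-1, 1}"
    proof
      fix x assume x: "x \<in> (\<Inter>m. A m)"
      have "\<bar>x\<bar> = 1"
      proof (rule ccontr)
        assume ne: "\<bar>x\<bar> \<noteq> 1"
        define d where "d = \<bar>\<bar>x\<bar> - 1\<bar>"
        have d0: "d > 0" using ne unfolding d_def by simp
        obtain m :: nat where m: "1 / d < real m" using reals_Archimedean2 by blast
        have "1/(real m + 4) < d"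
        proof -
          have "1 / d < real m + 4" using m by simp
          then show ?thesis using d0 by (simp add: field_simps)
        qed
        moreover have "x \<in> A m" using x by auto
        ultimately show False unfolding A_def d_def by auto
      qed
      then show "x \<in> {-1, 1}" by (auto simp: abs_if split: if_splits)
    qed
  qed
  have "(\<lambda>m. emeasure Lm (A m)) \<longlonglongrightarrow> emeasure Lm (\<Inter>m. A m)"
    using Asets anti Afin by (intro Lim_emeasure_decseq) auto
  then have lim: "(\<lambda>m. emeasure Lm (A m)) \<longlonglongrightarrow> 0" using inter Pi_pm1 by simp
  have "ennreal \<epsilon> > 0" using eps by simp
  then have "eventually (\<lambda>m. emeasure Lm (A m) < ennreal \<epsilon>) sequentially"
    using lim order_tendstoD(2) by blast
  then obtain m where m: "emeasure Lm (A m) < ennreal \<epsilon>" by (auto simp: eventually_sequentially)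
  have "measure Lm (A m) < \<epsilon>"
    using m Afin[of m] eps by (simp add: measure_def enn2real_less_iff top.not_eq_extremum)
  moreover have "1/(real m + 4) \<le> 1/4" by (simp add: field_simps)
  ultimately show ?thesis unfolding A_def by (intro exI[of _ "1/(real m + 4)"]) auto
qed

end

lemma ln_clip:
  fixes t R :: real
  assumes "R > 0"
  shows "ln (min (max (exp t) (exp (-R))) (exp R)) = min (max t (-R)) R"
proof (cases "t \<le> -R")
  case True
  have e1: "exp t \<le> exp (-R)" using True by simp
  have e2: "exp (-R) \<le> exp R" using assms by simp
  have "min (max (exp t) (exp (-R))) (exp R) = exp (-R)" using e1 e2 by (simp add: max_absorb2 min_absorb1)
  moreover have "min (max t (-R)) R = -R" using True assms by simp
  ultimately show ?thesis by simp
next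
  case False
  show ?thesis
  proof (cases "t \<le> R")
    case True
    have e1: "exp (-R) \<le> exp t" using False by simp
    have e2: "exp t \<le> exp R" using True by simp
    have "min (max (exp t) (exp (-R))) (exp R) = exp t" using e1 e2 by (simp add: max_absorb1 min_absorb1)
    moreover have "min (max t (-R)) R = t" using True False assms by simp
    ultimately show ?thesis by simp
  next
    case F2: False
    have e1: "exp (-R) \<le> exp t" using False by simp
    have e2: "exp R \<le> exp t" using F2 by simp
    have "min (max (exp t) (exp (-R))) (exp R) = exp R" using e1 e2 by (simp add: max_absorb1 min_absorb2)
    moreover have "min (max t (-R)) R = R" using F2 False assms by simp
    ultimately show ?thesis by simp
  qed
qed

lemma A1_wrap:
  fixes F :: "real \<Rightarrow> real" and p :: "nat \<Rightarrow> nat \<Rightarrow> real" and a :: "nat \<Rightarrow> real" and Lm :: "real measure"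
  assumes A1: "\<And>f :: ereal \<Rightarrow> real. continuous_on {0..\<infinity>} f \<Longrightarrow>
          (\<exists>\<delta>>0. \<forall>y\<in>{0..\<infinity>}. \<bar>y - 1\<bar> < ereal \<delta> \<longrightarrow> f y = 0) \<Longrightarrow>
          ((\<lambda>n. a n * (\<Sum>k. p n (Suc k) * f (ereal (real (Suc k) / real n))))
             \<longlongrightarrow> (\<integral>x. f (ereal (exp x)) \<partial>Lm)) sequentially"
    and Fc: "continuous_on UNIV F" and R: "R > 0" and d0: "\<delta>0 > 0"
    and F0: "\<And>x. \<bar>x\<bar> < \<delta>0 \<Longrightarrow> F x = 0"
    and Flo: "\<And>x. x \<le> -R \<Longrightarrow> F x = F (-R)"
    and Fhi: "\<And>x. x \<ge> R \<Longrightarrow> F x = 0"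
  shows "(\<lambda>n. a n * Pistar_int p n F) \<longlonglongrightarrow> (\<integral>x. F x \<partial>Lm)"
proof -
  define cl where "cl u = min (max u (ereal (exp (-R)))) (ereal (exp R))" for u :: ereal
  define f where "f u = F (ln (real_of_ereal (cl u)))" for u
  have Fclip: "F (min (max t (-R)) R) = F t" for t
  proof (cases "t \<le> -R")
    case True then show ?thesis using Flo[of t] R by (simp add: min_def max_def)
  next
    case False
    show ?thesis
    proof (cases "t \<ge> R")
      case True then show ?thesis using Fhi[of t] Fhi[of R] R by (simp add: min_def max_def)
    qed (use False in \<open>simp add: min_def max_def\<close>)
  qed
  have fexp: "f (ereal (exp t)) = F t" for t
  proof -
    have "real_of_ereal (cl (ereal (exp t))) = min (max (exp t) (exp (-R))) (exp R)"
      unfolding cl_def by (simp add: min_def max_def)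
    then show ?thesis unfolding f_def using ln_clip[OF R, of t] Fclip by simp
  qed
  have cont: "continuous_on {0..\<infinity>} f"
  proof -
    have c1: "continuous_on UNIV cl" unfolding cl_def by (intro continuous_intros)
    have img: "cl ` UNIV \<subseteq> UNIV - {\<infinity>, -\<infinity>}" unfolding cl_def by (auto simp: min_def max_def)
    have c2: "continuous_on UNIV (\<lambda>u. real_of_ereal (cl u))"
      by (rule continuous_on_compose2[OF continuous_on_real c1 img])
    have pos: "real_of_ereal (cl u) > 0" for u
    proof -
      have "ereal (exp (-R)) \<le> cl u" "cl u \<le> ereal (exp R)" unfolding cl_def using R by (auto simp: min_def max_def)
      then obtain r where "cl u = ereal r" "exp (-R) \<le> r" by (cases "cl u") auto
      then show ?thesis by (metis exp_gt_zero order_less_le_trans real_of_ereal.simps(1))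
    qed
    have c3: "continuous_on UNIV (\<lambda>u. ln (real_of_ereal (cl u)))"
      using c2 pos by (intro continuous_on_ln) (auto simp: less_imp_neq[symmetric])
    have "continuous_on UNIV f" unfolding f_def
      by (rule continuous_on_compose2[OF Fc c3]) auto
    then show ?thesis by (rule continuous_on_subset) auto
  qed
  have zero: "\<exists>\<delta>>0. \<forall>y\<in>{0..\<infinity>}. \<bar>y - 1\<bar> < ereal \<delta> \<longrightarrow> f y = 0"
  proof (intro exI conjI ballI impI)
    show "1 - exp (-\<delta>0) > 0" using d0 by simp
    fix y :: ereal assume y: "y \<in> {0..\<infinity>}" and ya: "\<bar>y - 1\<bar> < ereal (1 - exp (-\<delta>0))"
    obtain u where yu: "y = ereal u"
      using y ya by (cases y) auto
    have u1: "\<bar>u - 1\<bar> < 1 - exp (-\<delta>0)" using ya yu by (simp add: one_ereal_def)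
    have ulo: "exp (-\<delta>0) < u" using u1 by simp
    have ea: "1 + \<delta>0 \<le> exp \<delta>0" by (rule exp_ge_add_one_self)
    have eb: "1 + (-\<delta>0) \<le> exp (-\<delta>0)" by (rule exp_ge_add_one_self)
    have "2 \<le> exp \<delta>0 + exp (-\<delta>0)" using ea eb by linarith
    then have uhi: "u < exp \<delta>0" using u1 by simp
    have upos: "u > 0" using ulo by (metis exp_gt_zero order_less_trans)
    have lnu: "\<bar>ln u\<bar> < \<delta>0"
    proof -
      have "-\<delta>0 < ln u" using ulo upos by (metis exp_less_cancel_iff exp_ln)
      moreover have "ln u < \<delta>0" using uhi upos by (metis exp_less_cancel_iff exp_ln)
      ultimately show ?thesis by simp
    qed
    have "f y = F (min (max (ln u) (-R)) R)"
      using fexp[of "ln u"] upos Fclip unfolding yu by simp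
    also have "\<dots> = 0" using lnu d0 R by (intro F0) (auto simp: min_def max_def)
    finally show "f y = 0" .
  qed
  have lim: "(\<lambda>n. a n * (\<Sum>k. p n (Suc k) * f (ereal (real (Suc k) / real n))))
             \<longlonglongrightarrow> (\<integral>x. f (ereal (exp x)) \<partial>Lm)"
    by (rule A1[OF cont zero])
  have ev: "eventually (\<lambda>n. a n * (\<Sum>k. p n (Suc k) * f (ereal (real (Suc k) / real n))) =
       a n * Pistar_int p n F) sequentially"
  proof (rule eventually_sequentiallyI[of 1])
    fix n :: nat assume n: "n \<ge> 1"
    have "f (ereal (real (Suc k) / real n)) = F (ln (real (Suc k)) - ln (real n))" for k
    proof -
      have "real (Suc k) / real n = exp (ln (real (Suc k)) - ln (real n))"
        using n by (simp add: exp_diff)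
      then show ?thesis using fexp by metis
    qed
    then show "a n * (\<Sum>k. p n (Suc k) * f (ereal (real (Suc k) / real n))) = a n * Pistar_int p n F"
      unfolding Pistar_int_def by simp
  qed
  have "(\<integral>x. f (ereal (exp x)) \<partial>Lm) = (\<integral>x. F x \<partial>Lm)" by (simp add: fexp)
  then show ?thesis using Lim_transform_eventually[OF lim ev] by simp
qed

definition phiC :: "real \<Rightarrow> real \<Rightarrow> real" where "phiC \<delta> y = max 0 (min 1 (2 - \<bar>y\<bar> / \<delta>))"
definition Jin :: "real \<Rightarrow> real \<Rightarrow> real" where "Jin \<tau> y = max 0 (min 1 ((1 - \<bar>y\<bar>) / \<tau>))"
definition Jout :: "real \<Rightarrow> real \<Rightarrow> real" where "Jout \<tau> y = max 0 (min 1 ((1 + \<tau> - \<bar>y\<bar>) / \<tau>))"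
definition psiC :: "real \<Rightarrow> real \<Rightarrow> real" where "psiC \<tau> y = min (y * Jin \<tau> y) (y * Jout \<tau> y)"
definition chiC :: "real \<Rightarrow> real \<Rightarrow> real" where "chiC L y = max 0 (min 1 (L + 1 - y))"
definition Ifn :: "real \<Rightarrow> real" where "Ifn y = indicator {-1..1} y"
definition gfn :: "real \<Rightarrow> real \<Rightarrow> real" where "gfn b y = exp (b * y) - 1 - b * y * Ifn y"
definition Gfn :: "real \<Rightarrow> real \<Rightarrow> real \<Rightarrow> real \<Rightarrow> real" where
  "Gfn b \<tau> R y = max (exp (b * y)) (exp (- b * R)) - 1 - b * psiC \<tau> y"
definition F2fn :: "real \<Rightarrow> real \<Rightarrow> real \<Rightarrow> real \<Rightarrow> real \<Rightarrow> real \<Rightarrow> real" where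
  "F2fn b \<delta> \<tau> R L y = (1 - phiC \<delta> y) * Gfn b \<tau> R y * chiC L y"
definition psi1 :: "real \<Rightarrow> real \<Rightarrow> real \<Rightarrow> real" where
  "psi1 \<delta> \<tau> y = y\<^sup>2 * (Jin \<tau> y - phiC \<delta> y)"
definition Dset :: "real \<Rightarrow> real set" where "Dset \<tau> = {x. 1 - \<tau> < \<bar>x\<bar> \<and> \<bar>x\<bar> < 1 + \<tau>}"

locale params =
  fixes b \<delta> \<tau> R L :: real
  assumes b: "b > 0" and \<delta>: "0 < \<delta>" "\<delta> \<le> 1/8" and \<tau>: "0 < \<tau>" "\<tau> \<le> 1/4"
    and R: "R \<ge> 2" and L: "L \<ge> 2"
begin

lemma phi01: "0 \<le> phiC \<delta> y \<and> phiC \<delta> y \<le> 1" unfolding phiC_def by auto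
lemma Jin01: "0 \<le> Jin \<tau> y \<and> Jin \<tau> y \<le> 1" unfolding Jin_def by auto
lemma Jout01: "0 \<le> Jout \<tau> y \<and> Jout \<tau> y \<le> 1" unfolding Jout_def by auto
lemma chi01: "0 \<le> chiC L y \<and> chiC L y \<le> 1" unfolding chiC_def by auto

lemma phi_small: "\<bar>y\<bar> \<le> \<delta> \<Longrightarrow> phiC \<delta> y = 1"
proof -
  assume "\<bar>y\<bar> \<le> \<delta>"
  then have "\<bar>y\<bar> / \<delta> \<le> 1" using \<delta> by simp
  then show ?thesis unfolding phiC_def by simp
qed

lemma phi_big: "\<bar>y\<bar> \<ge> 2 * \<delta> \<Longrightarrow> phiC \<delta> y = 0"
proof -
  assume "\<bar>y\<bar> \<ge> 2 * \<delta>"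
  then have "\<bar>y\<bar> / \<delta> \<ge> 2" using \<delta> by (simp add: le_divide_eq)
  then show ?thesis unfolding phiC_def by simp
qed

lemma Jin_small: "\<bar>y\<bar> \<le> 1 - \<tau> \<Longrightarrow> Jin \<tau> y = 1"
proof -
  assume "\<bar>y\<bar> \<le> 1 - \<tau>"
  then have "(1 - \<bar>y\<bar>) / \<tau> \<ge> 1" using \<tau> by (simp add: le_divide_eq)
  then show ?thesis unfolding Jin_def by simp
qed

lemma Jin_big: "\<bar>y\<bar> \<ge> 1 \<Longrightarrow> Jin \<tau> y = 0"
proof -
  assume "\<bar>y\<bar> \<ge> 1"
  then have "(1 - \<bar>y\<bar>) / \<tau> \<le> 0" using \<tau> by (simp add: divide_le_0_iff)
  then show ?thesis unfolding Jin_def by simp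
qed

lemma Jout_small: "\<bar>y\<bar> \<le> 1 \<Longrightarrow> Jout \<tau> y = 1"
proof -
  assume "\<bar>y\<bar> \<le> 1"
  then have "(1 + \<tau> - \<bar>y\<bar>) / \<tau> \<ge> 1" using \<tau> by (simp add: le_divide_eq)
  then show ?thesis unfolding Jout_def by simp
qed

lemma Jout_big: "\<bar>y\<bar> \<ge> 1 + \<tau> \<Longrightarrow> Jout \<tau> y = 0"
proof -
  assume "\<bar>y\<bar> \<ge> 1 + \<tau>"
  then have "(1 + \<tau> - \<bar>y\<bar>) / \<tau> \<le> 0" using \<tau> by (simp add: divide_le_0_iff)
  then show ?thesis unfolding Jout_def by simp
qed

lemma Jin_le_Jout: "Jin \<tau> y \<le> Jout \<tau> y"
proof -
  have "(1 - \<bar>y\<bar>) / \<tau> \<le> (1 + \<tau> - \<bar>y\<bar>) / \<tau>" using \<tau> by (intro divide_right_mono) auto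
  then show ?thesis unfolding Jin_def Jout_def by (rule max.mono[OF order.refl min.mono[OF order.refl]])
qed

lemma psi_pos: "y \<ge> 0 \<Longrightarrow> psiC \<tau> y = y * Jin \<tau> y"
  unfolding psiC_def using Jin_le_Jout[of y] by (simp add: mult_left_mono min_absorb1)

lemma psi_neg: "y \<le> 0 \<Longrightarrow> psiC \<tau> y = y * Jout \<tau> y"
  unfolding psiC_def using Jin_le_Jout[of y] by (simp add: mult_left_mono_neg min_absorb2)

lemma psi_small: "\<bar>y\<bar> \<le> 1 - \<tau> \<Longrightarrow> psiC \<tau> y = y"
  using Jin_small[of y] Jout_small[of y] \<tau> unfolding psiC_def by simp

lemma psi_big: "\<bar>y\<bar> \<ge> 1 + \<tau> \<Longrightarrow> psiC \<tau> y = 0"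
  using Jin_big[of y] Jout_big[of y] \<tau> unfolding psiC_def by simp

lemma psi_le_yI: "psiC \<tau> y \<le> y * Ifn y"
proof (cases "y \<ge> 0")
  case True
  show ?thesis
  proof (cases "y \<le> 1")
    case True2: True
    then show ?thesis using True psi_pos[OF True] Jin01[of y] by (simp add: Ifn_def mult_left_le)
  next
    case False
    then show ?thesis using True psi_pos[OF True] Jin_big[of y] by (simp add: Ifn_def)
  qed
next
  case False
  then have y0: "y \<le> 0" by simp
  show ?thesis
  proof (cases "y \<ge> -1")
    case True
    then show ?thesis using y0 psi_neg[OF y0] Jout_small[of y] by (simp add: Ifn_def)
  next
    case F2: False
    then show ?thesis using y0 psi_neg[OF y0] Jout01[of y] by (simp add: Ifn_def mult_nonpos_nonneg)
  qed
qed

lemma yI_psi_le: "y * Ifn y - psiC \<tau> y \<le> 2 * indicator (Dset \<tau>) y"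
proof (cases "\<bar>y\<bar> \<le> 1 - \<tau>")
  case True
  have "Ifn y = 1" using True \<tau> by (simp add: Ifn_def abs_le_iff)
  then show ?thesis using psi_small[OF True] \<tau> by (simp add: indicator_def)
next
  case False
  show ?thesis
  proof (cases "\<bar>y\<bar> \<ge> 1 + \<tau>")
    case True
    have "Ifn y = 0" using True \<tau> by (auto simp: Ifn_def indicator_def abs_le_iff)
    then show ?thesis using psi_big[OF True] \<tau> by (simp add: indicator_def)
  next
    case F2: False
    have D: "y \<in> Dset \<tau>" using False F2 unfolding Dset_def by auto
    have "y * Ifn y - psiC \<tau> y \<le> 2"
    proof (cases "y \<ge> 0")
      case True
      have "psiC \<tau> y \<ge> 0" using psi_pos[OF True] Jin01[of y] True by simp
      moreover have "y * Ifn y \<le> 1" by (auto simp: Ifn_def indicator_def)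
      ultimately show ?thesis by simp
    next
      case Fy: False
      have "psiC \<tau> y \<ge> y" using psi_neg[of y] Fy Jout01[of y] by (simp add: mult_left_le_one_le mult_le_cancel_left1)
      moreover have "y * Ifn y \<le> 0" using Fy by (auto simp: Ifn_def indicator_def)
      moreover have "- y \<le> 2" using F2 \<tau> Fy by auto
      ultimately show ?thesis by simp
    qed
    then show ?thesis using D by simp
  qed
qed

lemma abs_psi: "\<bar>psiC \<tau> y\<bar> \<le> 2"
proof (cases "\<bar>y\<bar> \<ge> 1 + \<tau>")
  case True then show ?thesis using psi_big by simp
next
  case False
  then have y2: "\<bar>y\<bar> \<le> 2" using \<tau> by simp
  have "\<bar>y * Jin \<tau> y\<bar> \<le> 2" using y2 Jin01[of y] by (simp add: abs_mult mult_le_one order_trans[OF mult_right_le_one_le])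
  moreover have "\<bar>y * Jout \<tau> y\<bar> \<le> 2" using y2 Jout01[of y] by (simp add: abs_mult order_trans[OF mult_right_le_one_le])
  ultimately show ?thesis unfolding psiC_def by linarith
qed

lemma taylor_up: fixes x :: real shows "exp x - 1 - x \<le> x\<^sup>2 / 2 * exp \<bar>x\<bar>"
proof -
  obtain t where t: "\<bar>t\<bar> \<le> \<bar>x\<bar>" and e: "exp x = (\<Sum>m<2. x ^ m / fact m) + exp t / fact 2 * x ^ 2"
    using Maclaurin_exp_le[of x 2] by blast
  have "exp t \<le> exp \<bar>x\<bar>" using t by simp
  then have "exp t / 2 * x\<^sup>2 \<le> exp \<bar>x\<bar> / 2 * x\<^sup>2" by (intro mult_right_mono) auto
  then show ?thesis using e by (simp add: numeral_2_eq_2 algebra_simps)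
qed

lemma taylor_lo: fixes x :: real shows "x\<^sup>2 / 2 * exp (- \<bar>x\<bar>) \<le> exp x - 1 - x"
proof -
  obtain t where t: "\<bar>t\<bar> \<le> \<bar>x\<bar>" and e: "exp x = (\<Sum>m<2. x ^ m / fact m) + exp t / fact 2 * x ^ 2"
    using Maclaurin_exp_le[of x 2] by blast
  have "exp (- \<bar>x\<bar>) \<le> exp t" using t by simp
  then have "exp (- \<bar>x\<bar>) / 2 * x\<^sup>2 \<le> exp t / 2 * x\<^sup>2" by (intro mult_right_mono) auto
  then show ?thesis using e by (simp add: numeral_2_eq_2 algebra_simps)
qed

definition "Cup = b\<^sup>2 * exp (2 * b * \<delta>) / 2"
definition "Clo = b\<^sup>2 * exp (- (2 * b * \<delta>)) / 2"

lemma Ifn_phi: "phiC \<delta> y \<noteq> 0 \<Longrightarrow> Ifn y = 1 \<and> \<bar>y\<bar> < 2 * \<delta>"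
proof -
  assume "phiC \<delta> y \<noteq> 0"
  then have "\<bar>y\<bar> < 2 * \<delta>" using phi_big[of y] by force
  then show ?thesis using \<delta> by (auto simp: Ifn_def abs_less_iff)
qed

lemma g_phi_up: "gfn b y * phiC \<delta> y \<le> Cup * (y\<^sup>2 * phiC \<delta> y)"
proof (cases "phiC \<delta> y = 0")
  case True then show ?thesis by simp
next
  case False
  from Ifn_phi[OF False] have I: "Ifn y = 1" and y: "\<bar>y\<bar> < 2 * \<delta>" by auto
  have "gfn b y = exp (b*y) - 1 - b*y" unfolding gfn_def I by simp
  also have "\<dots> \<le> (b*y)\<^sup>2 / 2 * exp \<bar>b*y\<bar>" by (rule taylor_up)
  also have "\<dots> \<le> Cup * y\<^sup>2"
  proof -
    have "\<bar>b*y\<bar> \<le> 2 * b * \<delta>" using y b by (simp add: abs_mult)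
    then have "exp \<bar>b*y\<bar> \<le> exp (2 * b * \<delta>)" by simp
    then have "(b*y)\<^sup>2 / 2 * exp \<bar>b*y\<bar> \<le> (b*y)\<^sup>2 / 2 * exp (2 * b * \<delta>)" by (intro mult_left_mono) auto
    then show ?thesis unfolding Cup_def by (simp add: power_mult_distrib algebra_simps)
  qed
  finally show ?thesis using phi01[of y] by (simp add: mult_right_mono mult.assoc[symmetric])
qed

lemma g_phi_lo: "Clo * (y\<^sup>2 * phiC \<delta> y) \<le> gfn b y * phiC \<delta> y"
proof (cases "phiC \<delta> y = 0")
  case True then show ?thesis by simp
next
  case False
  from Ifn_phi[OF False] have I: "Ifn y = 1" and y: "\<bar>y\<bar> < 2 * \<delta>" by auto
  have "Clo * y\<^sup>2 \<le> (b*y)\<^sup>2 / 2 * exp (- \<bar>b*y\<bar>)"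
  proof -
    have "\<bar>b*y\<bar> \<le> 2 * b * \<delta>" using y b by (simp add: abs_mult)
    then have "exp (- (2 * b * \<delta>)) \<le> exp (- \<bar>b*y\<bar>)" by simp
    then have "(b*y)\<^sup>2 / 2 * exp (- (2 * b * \<delta>)) \<le> (b*y)\<^sup>2 / 2 * exp (- \<bar>b*y\<bar>)" by (intro mult_left_mono) auto
    then show ?thesis unfolding Clo_def by (simp add: power_mult_distrib algebra_simps)
  qed
  also have "\<dots> \<le> exp (b*y) - 1 - b*y" by (rule taylor_lo)
  also have "\<dots> = gfn b y" unfolding gfn_def I by simp
  finally show ?thesis using phi01[of y] by (simp add: mult_right_mono mult.assoc[symmetric])
qed

lemma psi1_small: "\<bar>y\<bar> < \<delta> \<Longrightarrow> psi1 \<delta> \<tau> y = 0"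
  using phi_small[of y] Jin_small[of y] \<delta> \<tau> unfolding psi1_def by simp

lemma psi1_big: "\<bar>y\<bar> \<ge> 1 \<Longrightarrow> psi1 \<delta> \<tau> y = 0"
  using phi_big[of y] Jin_big[of y] \<delta> unfolding psi1_def by simp

lemma psi1_bound: "\<bar>psi1 \<delta> \<tau> y\<bar> \<le> 1"
proof (cases "\<bar>y\<bar> \<ge> 1")
  case True then show ?thesis using psi1_big by simp
next
  case False
  then have "y\<^sup>2 \<le> 1" by (simp add: abs_square_le_1)
  moreover have "\<bar>Jin \<tau> y - phiC \<delta> y\<bar> \<le> 1" using Jin01[of y] phi01[of y] by linarith
  ultimately show ?thesis unfolding psi1_def by (simp add: abs_mult mult_le_one)
qed

lemma sq_phi_eq: "y\<^sup>2 * phiC \<delta> y = y\<^sup>2 * Ifn y - psi1 \<delta> \<tau> y - y\<^sup>2 * (Ifn y - Jin \<tau> y)"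
  unfolding psi1_def by (simp add: algebra_simps)

lemma sq_IJ: "0 \<le> y\<^sup>2 * (Ifn y - Jin \<tau> y) \<and> y\<^sup>2 * (Ifn y - Jin \<tau> y) \<le> indicator (Dset \<tau>) y"
proof (cases "\<bar>y\<bar> \<le> 1 - \<tau>")
  case True
  have "Ifn y = 1" using True \<tau> by (auto simp: Ifn_def indicator_def abs_le_iff)
  then show ?thesis using Jin_small[OF True] by (simp add: indicator_def)
next
  case False
  show ?thesis
  proof (cases "\<bar>y\<bar> > 1")
    case True
    have "Ifn y = 0" using True by (auto simp: Ifn_def indicator_def abs_le_iff)
    then show ?thesis using Jin_big[of y] True by (simp add: indicator_def)
  next
    case F2: False
    have D: "y \<in> Dset \<tau>" using False F2 \<tau> unfolding Dset_def by auto
    have I: "Ifn y = 1" using F2 by (auto simp: Ifn_def indicator_def abs_le_iff)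
    have "y\<^sup>2 \<le> 1" using F2 by (simp add: abs_square_le_1)
    moreover have "0 \<le> 1 - Jin \<tau> y \<and> 1 - Jin \<tau> y \<le> 1" using Jin01[of y] by simp
    ultimately show ?thesis using D I by (simp add: mult_le_one)
  qed
qed

lemma G_ge_g: "gfn b y \<le> Gfn b \<tau> R y"
proof -
  have "exp (b*y) \<le> max (exp (b * y)) (exp (- b * R))" by simp
  moreover have "b * psiC \<tau> y \<le> b * (y * Ifn y)" using psi_le_yI[of y] b by (simp add: mult_left_mono)
  ultimately show ?thesis unfolding gfn_def Gfn_def by (simp add: algebra_simps)
qed

lemma G_minus_g: "Gfn b \<tau> R y - gfn b y \<le> exp (- b * R) * indicator {..-R} y + 2 * b * indicator (Dset \<tau>) y"
proof -
  have m: "max (exp (b * y)) (exp (- b * R)) - exp (b*y) \<le> exp (- b * R) * indicator {..-R} y"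
  proof (cases "y \<le> -R")
    case True
    then show ?thesis by (simp add: indicator_def max_def)
  next
    case False
    then have "-R \<le> y" by simp
    then have "b * (-R) \<le> b * y" using b by (intro mult_left_mono) auto
    then have "- b * R \<le> b * y" by simp
    then show ?thesis using False by (simp add: indicator_def max_def)
  qed
  have p: "b * (y * Ifn y - psiC \<tau> y) \<le> 2 * b * indicator (Dset \<tau>) y"
    using yI_psi_le[of y] b by (simp add: mult_left_mono mult.assoc)
  have "Gfn b \<tau> R y - gfn b y = (max (exp (b * y)) (exp (- b * R)) - exp (b*y)) + b * (y * Ifn y - psiC \<tau> y)"
    unfolding gfn_def Gfn_def by (simp add: algebra_simps)
  then show ?thesis using m p by linarith
qed

lemma F2_small: "\<bar>y\<bar> < \<delta> \<Longrightarrow> F2fn b \<delta> \<tau> R L y = 0"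
  using phi_small[of y] unfolding F2fn_def by simp

lemma F2_hi: "y \<ge> L + 1 \<Longrightarrow> F2fn b \<delta> \<tau> R L y = 0"
  unfolding F2fn_def chiC_def by simp

lemma F2_lo: "y \<le> -R \<Longrightarrow> F2fn b \<delta> \<tau> R L y = exp (- b * R) - 1"
proof -
  assume y: "y \<le> -R"
  have "phiC \<delta> y = 0" using y R \<delta> by (intro phi_big) auto
  moreover have "psiC \<tau> y = 0" using y R \<tau> by (intro psi_big) auto
  moreover have "chiC L y = 1" using y R L unfolding chiC_def by auto
  moreover have "exp (b * y) \<le> exp (- b * R)"
  proof -
    have "b * y \<le> b * (-R)" using y b by (intro mult_left_mono) auto
    then show ?thesis by simp
  qed
  ultimately show ?thesis unfolding F2fn_def Gfn_def by (simp add: max_def)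
qed

lemma F2_bound: "\<bar>F2fn b \<delta> \<tau> R L y\<bar> \<le> exp (b * (L + 1)) + 2 + 2 * b"
proof (cases "y \<ge> L + 1")
  case True then show ?thesis using F2_hi[OF True] b by (simp add: add_nonneg_nonneg)
next
  case False
  have e1: "exp (b * y) \<le> exp (b * (L + 1))" using False b by (simp add: mult_left_mono)
  have e2: "exp (- b * R) \<le> 1" using b R by simp
  have e3: "exp (b * (L + 1)) \<ge> 1" using b L by simp
  have "\<bar>max (exp (b * y)) (exp (- b * R))\<bar> \<le> exp (b * (L + 1))" using e1 e2 e3 by (simp add: max_def)
  moreover have "\<bar>b * psiC \<tau> y\<bar> \<le> 2 * b" using abs_psi[of y] b by (simp add: abs_mult mult_left_mono mult.commute)
  ultimately have G: "\<bar>Gfn b \<tau> R y\<bar> \<le> exp (b * (L + 1)) + 2 + 2 * b" unfolding Gfn_def by linarith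
  have "\<bar>(1 - phiC \<delta> y) * chiC L y\<bar> \<le> 1" using phi01[of y] chi01[of y] by (simp add: abs_mult mult_le_one)
  then have "\<bar>(1 - phiC \<delta> y) * chiC L y\<bar> * \<bar>Gfn b \<tau> R y\<bar> \<le> 1 * (exp (b * (L + 1)) + 2 + 2 * b)"
    using G by (intro mult_mono) auto
  moreover have "F2fn b \<delta> \<tau> R L y = ((1 - phiC \<delta> y) * chiC L y) * Gfn b \<tau> R y"
    unfolding F2fn_def by (simp add: mult_ac)
  ultimately show ?thesis by (simp add: abs_mult)
qed

lemma F2_cont: "continuous_on UNIV (F2fn b \<delta> \<tau> R L)"
  unfolding F2fn_def Gfn_def psiC_def phiC_def chiC_def Jin_def Jout_def
  by (intro continuous_intros) (use \<delta> \<tau> in auto)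

lemma psi1_cont: "continuous_on UNIV (psi1 \<delta> \<tau>)"
  unfolding psi1_def phiC_def Jin_def by (intro continuous_intros) (use \<delta> \<tau> in auto)

lemma Cup_nonneg: "Cup \<ge> 0" unfolding Cup_def by simp

lemma star:
  assumes bb: "\<beta> > b"
  shows "exp (b*y) - 1 \<le> b * (y * Ifn y) + Cup * (y\<^sup>2 * Ifn y - psi1 \<delta> \<tau> y) + F2fn b \<delta> \<tau> R L y
     + exp (-(\<beta> - b) * L) * (exp (\<beta> * y) * indicator {1<..} y)"
proof -
  let ?t = "exp (-(\<beta> - b) * L) * (exp (\<beta> * y) * indicator {1<..} y)"
  have t0: "?t \<ge> 0" by simp
  have h1: "exp (b*y) - 1 = b * (y * Ifn y) + gfn b y * phiC \<delta> y + gfn b y * (1 - phiC \<delta> y)"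
    unfolding gfn_def by (simp add: algebra_simps)
  have h3: "gfn b y * phiC \<delta> y \<le> Cup * (y\<^sup>2 * Ifn y - psi1 \<delta> \<tau> y)"
  proof -
    have "y\<^sup>2 * phiC \<delta> y \<le> y\<^sup>2 * Ifn y - psi1 \<delta> \<tau> y"
      using sq_phi_eq[of y] sq_IJ[of y] by linarith
    then have "Cup * (y\<^sup>2 * phiC \<delta> y) \<le> Cup * (y\<^sup>2 * Ifn y - psi1 \<delta> \<tau> y)"
      using Cup_nonneg by (rule mult_left_mono)
    then show ?thesis using g_phi_up[of y] by linarith
  qed
  have h4: "gfn b y * (1 - phiC \<delta> y) \<le> Gfn b \<tau> R y * (1 - phiC \<delta> y)"
    using G_ge_g[of y] phi01[of y] by (intro mult_right_mono) auto
  have h5: "Gfn b \<tau> R y * (1 - phiC \<delta> y) \<le> F2fn b \<delta> \<tau> R L y + ?t"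
  proof (cases "y \<le> L")
    case True
    then have "chiC L y = 1" unfolding chiC_def by simp
    then show ?thesis using t0 unfolding F2fn_def by simp
  next
    case False
    have y2: "y \<ge> 2" using False L by simp
    have phi0: "phiC \<delta> y = 0" using y2 \<delta> by (intro phi_big) auto
    have psi0: "psiC \<tau> y = 0" using y2 \<tau> by (intro psi_big) auto
    have e1: "exp (b * y) \<ge> 1" using y2 b by simp
    have e2: "exp (- b * R) \<le> 1" using b R by simp
    have G: "Gfn b \<tau> R y = exp (b * y) - 1" unfolding Gfn_def psi0 using e1 e2 by (simp add: max_def)
    have "Gfn b \<tau> R y * (1 - phiC \<delta> y) = F2fn b \<delta> \<tau> R L y + Gfn b \<tau> R y * (1 - chiC L y)"
      unfolding F2fn_def phi0 by (simp add: algebra_simps)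
    also have "Gfn b \<tau> R y * (1 - chiC L y) \<le> exp (b * y)"
    proof -
      have "Gfn b \<tau> R y * (1 - chiC L y) \<le> Gfn b \<tau> R y * 1"
        using G e1 chi01[of y] by (intro mult_left_mono) auto
      then show ?thesis using G by simp
    qed
    also have "exp (b * y) \<le> ?t"
    proof -
      have "(\<beta> - b) * L \<le> (\<beta> - b) * y" using False bb by (intro mult_left_mono) auto
      then have "b * y \<le> -(\<beta> - b) * L + \<beta> * y" by (simp add: algebra_simps)
      then have "exp (b * y) \<le> exp (-(\<beta> - b) * L) * exp (\<beta> * y)" by (simp add: exp_add[symmetric])
      moreover have "indicator {1<..} y = (1::real)" using y2 by (simp add: indicator_def)
      ultimately show ?thesis by simp
    qed
    finally show ?thesis by simp
  qed
  show ?thesis using h1 h3 h4 h5 by linarith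
qed

end

locale pl = params b \<delta> \<tau> R L + levym Lm
  for b \<delta> \<tau> R L :: real and Lm :: "real measure" +
  assumes gint: "integrable Lm (gfn b)"
begin

lemma meas_Ifn: "Ifn \<in> borel_measurable borel" unfolding Ifn_def by measurable
lemma meas_g: "gfn b \<in> borel_measurable borel" unfolding gfn_def using meas_Ifn by measurable
lemma cont_phi: "continuous_on UNIV (phiC \<delta>)" unfolding phiC_def by (intro continuous_intros) (use \<delta> in auto)
lemma meas_phi: "phiC \<delta> \<in> borel_measurable borel" by (rule borel_measurable_continuous_onI[OF cont_phi])
lemma cont_Jin: "continuous_on UNIV (Jin \<tau>)" unfolding Jin_def by (intro continuous_intros) (use \<tau> in auto)
lemma meas_Jin: "Jin \<tau> \<in> borel_measurable borel" by (rule borel_measurable_continuous_onI[OF cont_Jin])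
lemma meas_psi1: "psi1 \<delta> \<tau> \<in> borel_measurable borel" by (rule borel_measurable_continuous_onI[OF psi1_cont])
lemma meas_F2: "F2fn b \<delta> \<tau> R L \<in> borel_measurable borel" by (rule borel_measurable_continuous_onI[OF F2_cont])
lemma meas_chi: "chiC L \<in> borel_measurable borel"
  by (rule borel_measurable_continuous_onI) (unfold chiC_def, intro continuous_intros)

lemma int_psi1: "integrable Lm (psi1 \<delta> \<tau>)"
  by (rule int_far[OF meas_psi1 psi1_bound psi1_small \<delta>(1)])

lemma int_F2: "integrable Lm (F2fn b \<delta> \<tau> R L)"
  by (rule int_far[OF meas_F2 F2_bound F2_small \<delta>(1)])

lemma sqI_bound: "\<bar>x\<^sup>2 * Ifn x\<bar> \<le> 1 * min 1 (x\<^sup>2)"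
  by (auto simp: Ifn_def indicator_def abs_square_le_1 abs_le_iff)

lemma int_sqI: "integrable Lm (\<lambda>x. x\<^sup>2 * Ifn x)"
  by (rule int_dom[OF _ sqI_bound]) (use meas_Ifn in measurable)

lemma sqphi_le: "x\<^sup>2 * phiC \<delta> x \<le> x\<^sup>2 * Ifn x"
proof (cases "phiC \<delta> x = 0")
  case True then show ?thesis by (simp add: Ifn_def)
next
  case False then show ?thesis using Ifn_phi[OF False] phi01[of x] by (simp add: mult_left_le)
qed

lemma int_sqphi: "integrable Lm (\<lambda>x. x\<^sup>2 * phiC \<delta> x)"
proof (rule int_dom[of _ 1])
  show "(\<lambda>x. x\<^sup>2 * phiC \<delta> x) \<in> borel_measurable borel" using meas_phi by measurable
  fix x
  have "0 \<le> x\<^sup>2 * phiC \<delta> x" using phi01[of x] by simp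
  then show "\<bar>x\<^sup>2 * phiC \<delta> x\<bar> \<le> 1 * min 1 (x\<^sup>2)" using sqphi_le[of x] sqI_bound[of x] by simp
qed

lemma int_sqIJ: "integrable Lm (\<lambda>x. x\<^sup>2 * (Ifn x - Jin \<tau> x))"
proof (rule int_dom[of _ 1])
  show "(\<lambda>x. x\<^sup>2 * (Ifn x - Jin \<tau> x)) \<in> borel_measurable borel" using meas_Ifn meas_Jin by measurable
  fix x
  have a: "0 \<le> x\<^sup>2 * (Ifn x - Jin \<tau> x)" using sq_IJ[of x] by simp
  have "x\<^sup>2 * (Ifn x - Jin \<tau> x) \<le> x\<^sup>2 * Ifn x" using Jin01[of x] by (simp add: mult_left_mono)
  then show "\<bar>x\<^sup>2 * (Ifn x - Jin \<tau> x)\<bar> \<le> 1 * min 1 (x\<^sup>2)" using a sqI_bound[of x] by simp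
qed

lemma int_gphi: "integrable Lm (\<lambda>x. gfn b x * phiC \<delta> x)"
proof (rule Bochner_Integration.integrable_bound[OF integrable_abs[OF gint]])
  show "(\<lambda>x. gfn b x * phiC \<delta> x) \<in> borel_measurable Lm" using meas_g meas_phi by (intro meas_Lm) measurable
  show "AE x in Lm. norm (gfn b x * phiC \<delta> x) \<le> norm \<bar>gfn b x\<bar>"
    using phi01 by (auto simp: abs_mult intro!: mult_left_le)
qed

lemma int_g1phi: "integrable Lm (\<lambda>x. gfn b x * (1 - phiC \<delta> x))"
proof (rule Bochner_Integration.integrable_bound[OF integrable_abs[OF gint]])
  show "(\<lambda>x. gfn b x * (1 - phiC \<delta> x)) \<in> borel_measurable Lm"
    using meas_g meas_phi by (intro meas_Lm borel_measurable_times borel_measurable_diff) auto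
  show "AE x in Lm. norm (gfn b x * (1 - phiC \<delta> x)) \<le> norm \<bar>gfn b x\<bar>"
    using phi01 by (auto simp: abs_mult intro!: mult_left_le)
qed

lemma sets_D: "Dset \<tau> \<in> sets Lm" unfolding Dset_def by (intro sets_Lm) measurable
lemma sets_far: "{x. 1/2 \<le> \<bar>x\<bar>} \<in> sets Lm" by (intro sets_Lm) measurable
lemma sets_lo: "{..-R} \<in> sets Lm" by (intro sets_Lm) measurable

lemma D_sub: "Dset \<tau> \<subseteq> {x. 1/2 \<le> \<bar>x\<bar>}" unfolding Dset_def using \<tau> by auto
lemma lo_sub: "{..-R} \<subseteq> {x. 1/2 \<le> \<bar>x\<bar>}" using R by auto

lemma far_fin: "{x. 1/2 \<le> \<bar>x\<bar>} \<in> fmeasurable Lm"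
  using fin_far[of "1/2"] sets_far by (auto simp: fmeasurable_def)

lemma D_fin: "Dset \<tau> \<in> fmeasurable Lm"
  using fmeasurableI2[OF far_fin D_sub sets_D] .

lemma lo_fin: "{..-R} \<in> fmeasurable Lm"
  using fmeasurableI2[OF far_fin lo_sub sets_lo] .

lemma int_ind: "A \<in> fmeasurable Lm \<Longrightarrow> integrable Lm (indicator A :: real \<Rightarrow> real)"
  by (auto simp: fmeasurable_def integrable_indicator_iff space_Lm)

lemma integral_ind: "A \<in> fmeasurable Lm \<Longrightarrow> (\<integral>x. indicator A x \<partial>Lm) = measure Lm A"
  by (auto simp: fmeasurable_def)

lemma lo_le: "measure Lm {..-R} \<le> measure Lm {x. 1/2 \<le> \<bar>x\<bar>}"
  by (rule measure_mono_fmeasurable[OF lo_sub sets_lo far_fin])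

lemma Cup_ge_Clo: "Clo \<le> Cup"
  unfolding Cup_def Clo_def using b \<delta> by (intro divide_right_mono mult_left_mono) auto

lemma F2_pt: "F2fn b \<delta> \<tau> R L y \<le> gfn b y * (1 - phiC \<delta> y) + exp (- b * R) * indicator {..-R} y + 2 * b * indicator (Dset \<tau>) y"
proof -
  have a: "(1 - phiC \<delta> y) * gfn b y * chiC L y \<le> gfn b y * (1 - phiC \<delta> y)"
  proof (cases "y \<le> L")
    case True then have "chiC L y = 1" unfolding chiC_def by simp
    then show ?thesis by simp
  next
    case False
    have y2: "y \<ge> 2" using False L by simp
    have phi0: "phiC \<delta> y = 0" using y2 \<delta> by (intro phi_big) auto
    have I0: "Ifn y = 0" using y2 by (simp add: Ifn_def indicator_def)
    have g0: "gfn b y \<ge> 0" unfolding gfn_def I0 using y2 b by simp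
    have "gfn b y * chiC L y \<le> gfn b y * 1" using g0 chi01[of y] by (intro mult_left_mono) auto
    then show ?thesis using phi0 by (simp add: mult.commute)
  qed
  have c: "(1 - phiC \<delta> y) * (Gfn b \<tau> R y - gfn b y) * chiC L y \<le> Gfn b \<tau> R y - gfn b y"
  proof -
    have "0 \<le> Gfn b \<tau> R y - gfn b y" using G_ge_g[of y] by simp
    moreover have "0 \<le> (1 - phiC \<delta> y) * chiC L y \<and> (1 - phiC \<delta> y) * chiC L y \<le> 1"
      using phi01[of y] chi01[of y] by (auto simp: mult_le_one)
    ultimately have "((1 - phiC \<delta> y) * chiC L y) * (Gfn b \<tau> R y - gfn b y) \<le> 1 * (Gfn b \<tau> R y - gfn b y)"
      by (intro mult_right_mono) auto
    then show ?thesis by (simp add: mult_ac)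
  qed
  have "F2fn b \<delta> \<tau> R L y = (1 - phiC \<delta> y) * gfn b y * chiC L y + (1 - phiC \<delta> y) * (Gfn b \<tau> R y - gfn b y) * chiC L y"
    unfolding F2fn_def by (simp add: algebra_simps)
  then show ?thesis using a c G_minus_g[of y] by linarith
qed

definition "Qv = (\<integral>x. x\<^sup>2 * Ifn x \<partial>Lm)"
definition "mD = measure Lm (Dset \<tau>)"
definition "Lam1 = measure Lm {x. 1/2 \<le> \<bar>x\<bar>}"

lemma Zb: "Cup * (\<sigma>2 + Qv - (\<integral>x. psi1 \<delta> \<tau> x \<partial>Lm)) + (\<integral>x. F2fn b \<delta> \<tau> R L x \<partial>Lm)
   \<le> Cup * \<sigma>2 + (\<integral>x. gfn b x \<partial>Lm) + (Cup - Clo) * Qv + (Cup + 2 * b) * mD + exp (- b * R) * Lam1"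
proof -
  have i1: "Qv - (\<integral>x. psi1 \<delta> \<tau> x \<partial>Lm) = (\<integral>x. x\<^sup>2 * phiC \<delta> x \<partial>Lm) + (\<integral>x. x\<^sup>2 * (Ifn x - Jin \<tau> x) \<partial>Lm)"
  proof -
    have "Qv - (\<integral>x. psi1 \<delta> \<tau> x \<partial>Lm) = (\<integral>x. x\<^sup>2 * Ifn x - psi1 \<delta> \<tau> x \<partial>Lm)"
      unfolding Qv_def using int_sqI int_psi1 by simp
    also have "\<dots> = (\<integral>x. x\<^sup>2 * phiC \<delta> x + x\<^sup>2 * (Ifn x - Jin \<tau> x) \<partial>Lm)"
      using sq_phi_eq by (intro Bochner_Integration.integral_cong) (auto simp: algebra_simps)
    also have "\<dots> = (\<integral>x. x\<^sup>2 * phiC \<delta> x \<partial>Lm) + (\<integral>x. x\<^sup>2 * (Ifn x - Jin \<tau> x) \<partial>Lm)"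
      using int_sqphi int_sqIJ by simp
    finally show ?thesis .
  qed
  have i2: "(\<integral>x. x\<^sup>2 * (Ifn x - Jin \<tau> x) \<partial>Lm) \<le> mD"
  proof -
    have "(\<integral>x. x\<^sup>2 * (Ifn x - Jin \<tau> x) \<partial>Lm) \<le> (\<integral>x. indicator (Dset \<tau>) x \<partial>Lm)"
      using sq_IJ by (intro integral_mono int_sqIJ int_ind[OF D_fin]) auto
    then show ?thesis unfolding mD_def using integral_ind[OF D_fin] by simp
  qed
  have i3: "Clo * (\<integral>x. x\<^sup>2 * phiC \<delta> x \<partial>Lm) \<le> (\<integral>x. gfn b x * phiC \<delta> x \<partial>Lm)"
  proof -
    have "(\<integral>x. Clo * (x\<^sup>2 * phiC \<delta> x) \<partial>Lm) \<le> (\<integral>x. gfn b x * phiC \<delta> x \<partial>Lm)"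
      using g_phi_lo int_sqphi by (intro integral_mono int_gphi) auto
    then show ?thesis by simp
  qed
  have i4: "(\<integral>x. x\<^sup>2 * phiC \<delta> x \<partial>Lm) \<le> Qv"
    unfolding Qv_def using sqphi_le by (intro integral_mono int_sqphi int_sqI) auto
  have i5: "(\<integral>x. F2fn b \<delta> \<tau> R L x \<partial>Lm) \<le> (\<integral>x. gfn b x * (1 - phiC \<delta> x) \<partial>Lm) + exp (- b * R) * measure Lm {..-R} + 2 * b * mD"
  proof -
    have intr: "integrable Lm (\<lambda>y. gfn b y * (1 - phiC \<delta> y) + exp (- b * R) * indicator {..-R} y + 2 * b * indicator (Dset \<tau>) y)"
      using int_g1phi int_ind[OF lo_fin] int_ind[OF D_fin] by auto
    have "(\<integral>x. F2fn b \<delta> \<tau> R L x \<partial>Lm) \<le> (\<integral>y. gfn b y * (1 - phiC \<delta> y) + exp (- b * R) * indicator {..-R} y + 2 * b * indicator (Dset \<tau>) y \<partial>Lm)"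
      using F2_pt by (intro integral_mono int_F2 intr) auto
    also have "\<dots> = (\<integral>x. gfn b x * (1 - phiC \<delta> x) \<partial>Lm) + exp (- b * R) * measure Lm {..-R} + 2 * b * mD"
      using int_g1phi int_ind[OF lo_fin] int_ind[OF D_fin] integral_ind[OF lo_fin] integral_ind[OF D_fin]
      unfolding mD_def by simp
    finally show ?thesis .
  qed
  have i6: "(\<integral>x. gfn b x \<partial>Lm) = (\<integral>x. gfn b x * phiC \<delta> x \<partial>Lm) + (\<integral>x. gfn b x * (1 - phiC \<delta> x) \<partial>Lm)"
  proof -
    have "(\<integral>x. gfn b x \<partial>Lm) = (\<integral>x. gfn b x * phiC \<delta> x + gfn b x * (1 - phiC \<delta> x) \<partial>Lm)"
      by (simp add: algebra_simps)
    then show ?thesis using int_gphi int_g1phi by simp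
  qed
  have i7: "exp (- b * R) * measure Lm {..-R} \<le> exp (- b * R) * Lam1"
    unfolding Lam1_def using lo_le by simp
  have Cup0: "0 \<le> Cup" by (rule Cup_nonneg)
  have Q0: "0 \<le> (\<integral>x. x\<^sup>2 * phiC \<delta> x \<partial>Lm)"
    using phi01 by (intro Bochner_Integration.integral_nonneg) auto
  have cc: "Cup * (\<integral>x. x\<^sup>2 * phiC \<delta> x \<partial>Lm) \<le> (\<integral>x. gfn b x * phiC \<delta> x \<partial>Lm) + (Cup - Clo) * Qv"
  proof -
    have "(Cup - Clo) * (\<integral>x. x\<^sup>2 * phiC \<delta> x \<partial>Lm) \<le> (Cup - Clo) * Qv"
      using Cup_ge_Clo i4 by (intro mult_left_mono) auto
    then show ?thesis using i3 by (simp add: algebra_simps)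
  qed
  have "Cup * (\<sigma>2 + Qv - (\<integral>x. psi1 \<delta> \<tau> x \<partial>Lm)) = Cup * \<sigma>2 + Cup * (Qv - (\<integral>x. psi1 \<delta> \<tau> x \<partial>Lm))"
    by (simp add: algebra_simps)
  also have "\<dots> = Cup * \<sigma>2 + Cup * ((\<integral>x. x\<^sup>2 * phiC \<delta> x \<partial>Lm) + (\<integral>x. x\<^sup>2 * (Ifn x - Jin \<tau> x) \<partial>Lm))"
    by (simp only: i1)
  also have "\<dots> = Cup * \<sigma>2 + Cup * (\<integral>x. x\<^sup>2 * phiC \<delta> x \<partial>Lm) + Cup * (\<integral>x. x\<^sup>2 * (Ifn x - Jin \<tau> x) \<partial>Lm)"
    by (simp only: distrib_left add.assoc)
  finally have eqA: "Cup * (\<sigma>2 + Qv - (\<integral>x. psi1 \<delta> \<tau> x \<partial>Lm)) = Cup * \<sigma>2 + Cup * (\<integral>x. x\<^sup>2 * phiC \<delta> x \<partial>Lm) + Cup * (\<integral>x. x\<^sup>2 * (Ifn x - Jin \<tau> x) \<partial>Lm)" .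
  have m2: "Cup * (\<integral>x. x\<^sup>2 * (Ifn x - Jin \<tau> x) \<partial>Lm) \<le> Cup * mD" using i2 Cup0 by (rule mult_left_mono)
  have dist: "(Cup + 2 * b) * mD = Cup * mD + 2 * b * mD" by (simp add: algebra_simps)
  show ?thesis using eqA m2 cc i5 i6 i7 dist by linarith
qed

end

lemma A3_bound:
  fixes p :: "nat \<Rightarrow> nat \<Rightarrow> real" and a :: "nat \<Rightarrow> real" and G :: "real \<Rightarrow> real"
  assumes p_nonneg: "\<And>n k. p n k \<ge> 0" and a_pos: "\<And>n. a n > 0" and G0: "\<And>x. G x \<ge> 0"
    and A3: "limsup (\<lambda>n. ennreal (a n) * Pistar_nn p n G) < \<infinity>"
  shows "\<exists>C N. C > 0 \<and> (\<forall>n\<ge>N. summable (\<lambda>k. p n (Suc k) * G (ln (real (Suc k)) - ln (real n))) \<and>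
      a n * (\<Sum>k. p n (Suc k) * G (ln (real (Suc k)) - ln (real n))) \<le> C)"
proof -
  obtain r where r: "r \<ge> 0" "limsup (\<lambda>n. ennreal (a n) * Pistar_nn p n G) = ennreal r"
    using A3 less_top_ennreal by (metis infinity_ennreal_def)
  have "limsup (\<lambda>n. ennreal (a n) * Pistar_nn p n G) < ennreal (r + 1)" using r by simp
  then have "eventually (\<lambda>n. ennreal (a n) * Pistar_nn p n G < ennreal (r + 1)) sequentially"
    by (rule Limsup_lessD)
  then obtain N where N: "\<And>n. n \<ge> N \<Longrightarrow> ennreal (a n) * Pistar_nn p n G < ennreal (r + 1)"
    by (auto simp: eventually_sequentially)
  show ?thesis
  proof (intro exI conjI allI impI)
    show "r + 1 > 0" using r by simp
    fix n assume n: "n \<ge> N"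
    let ?t = "\<lambda>k. p n (Suc k) * G (ln (real (Suc k)) - ln (real n))"
    have t0: "\<And>k. ?t k \<ge> 0" using p_nonneg G0 by simp
    have lt: "ennreal (a n) * (\<Sum>k. ennreal (?t k)) < ennreal (r + 1)" using N[OF n] unfolding Pistar_nn_def .
    have fin: "(\<Sum>k. ennreal (?t k)) \<noteq> \<top>"
    proof
      assume "(\<Sum>k. ennreal (?t k)) = \<top>"
      then have "ennreal (a n) * (\<Sum>k. ennreal (?t k)) = \<top>" using a_pos[of n] by (simp add: ennreal_mult_top)
      then show False using lt by simp
    qed
    show sm: "summable ?t" by (rule summable_suminf_not_top[OF t0 fin])
    have eqS: "(\<Sum>k. ennreal (?t k)) = ennreal (\<Sum>k. ?t k)" by (rule suminf_ennreal2[OF t0 sm])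
    have s0: "(\<Sum>k. ?t k) \<ge> 0" by (rule suminf_nonneg[OF sm t0])
    have "ennreal (a n * (\<Sum>k. ?t k)) = ennreal (a n) * ennreal (\<Sum>k. ?t k)"
      by (rule ennreal_mult) (use a_pos[of n] s0 in auto)
    also have "\<dots> = ennreal (a n) * (\<Sum>k. ennreal (?t k))" by (simp only: eqS)
    also have "\<dots> < ennreal (r + 1)" by (rule lt)
    finally have "ennreal (a n * (\<Sum>k. ?t k)) < ennreal (r + 1)" .
    then have "a n * (\<Sum>k. ?t k) < r + 1"
      using a_pos[of n] suminf_nonneg[OF sm t0] r by (subst (asm) ennreal_less_iff) auto
    then show "a n * (\<Sum>k. ?t k) \<le> r + 1" by simp
  qed
qed

lemma per_j:
  fixes p :: "nat \<Rightarrow> nat \<Rightarrow> real" and j :: nat and PA PB T :: "real \<Rightarrow> real"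
  assumes p_nonneg: "\<And>n k. p n k \<ge> 0" and ps: "(\<lambda>k. p j (Suc k)) sums 1" and j1: "j \<ge> 1"
    and aj: "aj > 0" and b0: "\<beta>0 > 0"
    and star: "\<And>y. exp (\<beta>0*y) - 1 \<le> \<beta>0 * (y * indicator {-1..1} y) + Cu * (y\<^sup>2 * indicator {-1..1} y - PA y) + PB y + cL * T y"
    and B1: "\<And>y. \<bar>PA y\<bar> \<le> B1" and B2: "\<And>y. \<bar>PB y\<bar> \<le> B2" and T0: "\<And>y. T y \<ge> 0"
    and sT: "summable (\<lambda>k. p j (Suc k) * T (ln (real (Suc k)) - ln (real j)))"
    and bound: "\<beta>0 * (aj * Pistar_int p j (\<lambda>x. x * indicator {-1..1} x))
       + Cu * (aj * Pistar_int p j (\<lambda>x. x\<^sup>2 * indicator {-1..1} x) - aj * Pistar_int p j PA)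
       + aj * Pistar_int p j PB + cL * (aj * (\<Sum>k. p j (Suc k) * T (ln (real (Suc k)) - ln (real j)))) < 0"
  shows "summable (\<lambda>k. p j (Suc k) * real (Suc k) powr \<beta>0) \<and>
    (\<Sum>k. p j (Suc k) * real (Suc k) powr \<beta>0) \<le> real j powr \<beta>0"
proof -
  define yk where "yk k = ln (real (Suc k)) - ln (real j)" for k
  define u where "u k = p j (Suc k)" for k
  have u0: "u k \<ge> 0" for k unfolding u_def using p_nonneg by simp
  have su: "summable u" using ps unfolding u_def by (simp add: sums_summable)
  have su1: "(\<Sum>k. u k) = 1" using ps unfolding u_def by (metis sums_unique)
  have cmp: "summable (\<lambda>k. u k * G (yk k))" if "\<And>y. \<bar>G y\<bar> \<le> B" for G B
  proof (rule summable_comparison_test'[of "\<lambda>k. B * u k" 0])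
    show "summable (\<lambda>k. B * u k)" using su by (rule summable_mult)
    fix k show "norm (u k * G (yk k)) \<le> B * u k"
      using mult_left_mono[OF that[of "yk k"] u0[of k]] u0[of k] by (simp add: abs_mult mult.commute)
  qed
  have bI: "\<bar>y * indicator {-1..1} y\<bar> \<le> 1" for y :: real by (auto simp: indicator_def abs_le_iff)
  have bI2: "\<bar>y\<^sup>2 * indicator {-1..1} y\<bar> \<le> 1" for y :: real by (auto simp: indicator_def abs_square_le_1 abs_le_iff)
  define r1 where "r1 k = u k * (yk k * indicator {-1..1} (yk k))" for k
  define r2 where "r2 k = u k * ((yk k)\<^sup>2 * indicator {-1..1} (yk k))" for k
  define r3 where "r3 k = u k * PA (yk k)" for k
  define r4 where "r4 k = u k * PB (yk k)" for k
  define r5 where "r5 k = u k * T (yk k)" for k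
  have s1: "summable r1" unfolding r1_def by (rule cmp[OF bI])
  have s2: "summable r2" unfolding r2_def by (rule cmp[OF bI2])
  have s3: "summable r3" unfolding r3_def by (rule cmp[OF B1])
  have s4: "summable r4" unfolding r4_def by (rule cmp[OF B2])
  have s5: "summable r5" using sT unfolding r5_def u_def yk_def .
  define RH where "RH k = \<beta>0 * r1 k + Cu * (r2 k - r3 k) + r4 k + cL * r5 k" for k
  have sRH: "summable RH" unfolding RH_def using s1 s2 s3 s4 s5
    by (intro summable_add summable_mult summable_diff) auto
  have RHsum: "(\<Sum>k. RH k) = \<beta>0 * (\<Sum>k. r1 k) + Cu * ((\<Sum>k. r2 k) - (\<Sum>k. r3 k)) + (\<Sum>k. r4 k) + cL * (\<Sum>k. r5 k)"
  proof -
    have "(\<Sum>k. RH k) = (\<Sum>k. \<beta>0 * r1 k + Cu * (r2 k - r3 k) + r4 k) + (\<Sum>k. cL * r5 k)"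
      unfolding RH_def using s1 s2 s3 s4 s5
      by (intro suminf_add[symmetric] summable_add summable_mult summable_diff) auto
    also have "(\<Sum>k. \<beta>0 * r1 k + Cu * (r2 k - r3 k) + r4 k) = (\<Sum>k. \<beta>0 * r1 k + Cu * (r2 k - r3 k)) + (\<Sum>k. r4 k)"
      using s1 s2 s3 s4 by (intro suminf_add[symmetric] summable_add summable_mult summable_diff) auto
    also have "(\<Sum>k. \<beta>0 * r1 k + Cu * (r2 k - r3 k)) = (\<Sum>k. \<beta>0 * r1 k) + (\<Sum>k. Cu * (r2 k - r3 k))"
      using s1 s2 s3 by (intro suminf_add[symmetric] summable_add summable_mult summable_diff) auto
    also have "(\<Sum>k. Cu * (r2 k - r3 k)) = Cu * (\<Sum>k. r2 k - r3 k)"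
      using s2 s3 by (intro suminf_mult summable_diff) auto
    also have "(\<Sum>k. r2 k - r3 k) = (\<Sum>k. r2 k) - (\<Sum>k. r3 k)"
      using s2 s3 by (intro suminf_diff[symmetric])
    also have "(\<Sum>k. \<beta>0 * r1 k) = \<beta>0 * (\<Sum>k. r1 k)" using s1 by (rule suminf_mult)
    also have "(\<Sum>k. cL * r5 k) = cL * (\<Sum>k. r5 k)" using s5 by (rule suminf_mult)
    finally show ?thesis .
  qed
  define Tk where "Tk k = u k * exp (\<beta>0 * yk k)" for k
  have Tk_le: "Tk k - u k \<le> RH k" for k
  proof -
    have "u k * (exp (\<beta>0 * yk k) - 1) \<le> u k * (\<beta>0 * (yk k * indicator {-1..1} (yk k)) + Cu * ((yk k)\<^sup>2 * indicator {-1..1} (yk k) - PA (yk k)) + PB (yk k) + cL * T (yk k))"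
      using star[of "yk k"] u0[of k] by (rule mult_left_mono)
    then show ?thesis unfolding Tk_def RH_def r1_def r2_def r3_def r4_def r5_def by (simp add: algebra_simps)
  qed
  have Tk0: "Tk k \<ge> 0" for k unfolding Tk_def using u0 by simp
  have sTk: "summable Tk"
  proof (rule summable_comparison_test'[of "\<lambda>k. u k + RH k" 0])
    show "summable (\<lambda>k. u k + RH k)" using su sRH by (rule summable_add)
    fix k show "norm (Tk k) \<le> u k + RH k" using Tk_le[of k] Tk0[of k] by simp
  qed
  have "(\<Sum>k. Tk k) - 1 = (\<Sum>k. Tk k - u k)" using suminf_diff[OF sTk su] su1 by simp
  also have "\<dots> \<le> (\<Sum>k. RH k)" using Tk_le sTk su sRH by (intro suminf_le summable_diff) auto
  finally have TH: "(\<Sum>k. Tk k) - 1 \<le> (\<Sum>k. RH k)" .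
  have PI: "Pistar_int p j G = (\<Sum>k. u k * G (yk k))" for G unfolding Pistar_int_def u_def yk_def ..
  have "aj * (\<Sum>k. RH k) = \<beta>0 * (aj * Pistar_int p j (\<lambda>x. x * indicator {-1..1} x))
       + Cu * (aj * Pistar_int p j (\<lambda>x. x\<^sup>2 * indicator {-1..1} x) - aj * Pistar_int p j PA)
       + aj * Pistar_int p j PB + cL * (aj * (\<Sum>k. p j (Suc k) * T (ln (real (Suc k)) - ln (real j))))"
    unfolding RHsum PI r1_def r2_def r3_def r4_def r5_def by (simp add: algebra_simps u_def yk_def)
  then have "aj * (\<Sum>k. RH k) < 0" using bound by simp
  then have "(\<Sum>k. RH k) < 0" using aj by (simp add: mult_less_0_iff)
  then have Tlt: "(\<Sum>k. Tk k) \<le> 1" using TH by simp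
  have eqk: "p j (Suc k) * real (Suc k) powr \<beta>0 = real j powr \<beta>0 * Tk k" for k
  proof -
    have "exp (\<beta>0 * yk k) = real (Suc k) powr \<beta>0 / real j powr \<beta>0"
      unfolding yk_def using j1 by (simp add: powr_def right_diff_distrib exp_diff)
    then show ?thesis unfolding Tk_def u_def using j1 by simp
  qed
  have sfin: "summable (\<lambda>k. real j powr \<beta>0 * Tk k)" using sTk by (rule summable_mult)
  show ?thesis
  proof
    show "summable (\<lambda>k. p j (Suc k) * real (Suc k) powr \<beta>0)" unfolding eqk by (rule sfin)
    have "(\<Sum>k. p j (Suc k) * real (Suc k) powr \<beta>0) = real j powr \<beta>0 * (\<Sum>k. Tk k)"
      unfolding eqk using sTk by (rule suminf_mult)
    also have "\<dots> \<le> real j powr \<beta>0 * 1" using Tlt by (intro mult_left_mono) auto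
    finally show "(\<Sum>k. p j (Suc k) * real (Suc k) powr \<beta>0) \<le> real j powr \<beta>0" by simp
  qed
qed

lemma tail_choice:
  fixes c \<kappa> s X :: real
  assumes "c \<ge> 0" "\<kappa> > 0" "s > 0" "X \<ge> (4 * c + 1) / (\<kappa> * s)"
  shows "exp (- (s * X)) * c < \<kappa> / 4"
proof -
  have "s * X \<ge> (4 * c + 1) / \<kappa>" using assms by (simp add: field_simps)
  then have e: "exp (s * X) \<ge> 1 + (4 * c + 1) / \<kappa>" using exp_ge_add_one_self[of "s * X"] by linarith
  have "\<kappa> * exp (s * X) \<ge> \<kappa> * (1 + (4 * c + 1) / \<kappa>)" by (intro mult_left_mono[OF e]) (use assms(2) in simp)
  also have "\<kappa> * (1 + (4 * c + 1) / \<kappa>) = \<kappa> + 4 * c + 1" using assms(2) by (simp add: field_simps)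
  finally have "4 * c < \<kappa> * exp (s * X)" using assms(2) by simp
  then show ?thesis by (simp add: exp_minus field_simps)
qed

lemma analytic:
  fixes p :: "nat \<Rightarrow> nat \<Rightarrow> real" and a :: "nat \<Rightarrow> real" and Lm :: "real measure"
    and bd \<sigma>2 \<beta> \<beta>0 :: real
  assumes p_nonneg: "\<And>n k. p n k \<ge> 0"
    and p_sum: "\<And>n. n \<ge> 1 \<Longrightarrow> (\<lambda>k. p n (Suc k)) sums 1"
    and a_pos: "\<And>n. a n > 0"
    and Pi_sets: "sets Lm = sets borel"
    and Pi_pm1: "emeasure Lm {-1, 1} = 0"
    and Pi_levy: "(\<integral>\<^sup>+ x. ennreal (min 1 (x\<^sup>2)) \<partial>Lm) < \<infinity>"
    and A1: "\<And>f :: ereal \<Rightarrow> real. continuous_on {0..\<infinity>} f \<Longrightarrow>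
          (\<exists>\<delta>>0. \<forall>y\<in>{0..\<infinity>}. \<bar>y - 1\<bar> < ereal \<delta> \<longrightarrow> f y = 0) \<Longrightarrow>
          ((\<lambda>n. a n * (\<Sum>k. p n (Suc k) * f (ereal (real (Suc k) / real n))))
             \<longlongrightarrow> (\<integral>x. f (ereal (exp x)) \<partial>Lm)) sequentially"
    and \<sigma>2_nonneg: "\<sigma>2 \<ge> 0"
    and A2_b: "((\<lambda>n. a n * Pistar_int p n (\<lambda>x. x * indicator {-1..1} x)) \<longlongrightarrow> bd) sequentially"
    and A2_\<sigma>: "((\<lambda>n. a n * Pistar_int p n (\<lambda>x. x\<^sup>2 * indicator {-1..1} x))
          \<longlongrightarrow> \<sigma>2 + (\<integral>x. x\<^sup>2 * indicator {-1..1} x \<partial>Lm)) sequentially"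
    and A3: "limsup (\<lambda>n. ennreal (a n) * Pistar_nn p n (\<lambda>x. exp (\<beta> * x) * indicator {1<..} x)) < \<infinity>"
    and b0: "0 < \<beta>0" "\<beta>0 < \<beta>"
    and Psi_finite: "integrable Lm (\<lambda>x. exp (\<beta>0 * x) - 1 - \<beta>0 * x * indicator {-1..1} x)"
    and Psi_neg: "Psi \<sigma>2 bd Lm \<beta>0 < 0"
  shows "\<exists>x0::nat. \<forall>j\<ge>x0. summable (\<lambda>k. p j (Suc k) * real (Suc k) powr \<beta>0) \<and>
          (\<Sum>k. p j (Suc k) * real (Suc k) powr \<beta>0) \<le> real j powr \<beta>0"
proof -
  interpret levym Lm by unfold_locales (rule Pi_sets Pi_pm1 Pi_levy)+
  have gint: "integrable Lm (gfn \<beta>0)"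
    using Psi_finite unfolding gfn_def[abs_def] Ifn_def .
  define \<kappa> where "\<kappa> = - Psi \<sigma>2 bd Lm \<beta>0"
  have k0: "\<kappa> > 0" unfolding \<kappa>_def using Psi_neg by simp
  have PsiE: "Psi \<sigma>2 bd Lm \<beta>0 = \<sigma>2 * \<beta>0\<^sup>2 / 2 + bd * \<beta>0 + (\<integral>x. gfn \<beta>0 x \<partial>Lm)"
    unfolding Psi_def gfn_def Ifn_def by simp
  define Q where "Q = (\<integral>x. x\<^sup>2 * Ifn x \<partial>Lm)"
  have Q0: "Q \<ge> 0" unfolding Q_def by (intro Bochner_Integration.integral_nonneg) (simp add: Ifn_def)
  obtain C3 N3 where C3: "C3 > 0" and N3: "\<And>n. n \<ge> N3 \<Longrightarrow>
      summable (\<lambda>k. p n (Suc k) * (exp (\<beta> * (ln (real (Suc k)) - ln (real n))) * indicator {1<..} (ln (real (Suc k)) - ln (real n)))) \<and>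
      a n * (\<Sum>k. p n (Suc k) * (exp (\<beta> * (ln (real (Suc k)) - ln (real n))) * indicator {1<..} (ln (real (Suc k)) - ln (real n)))) \<le> C3"
    using A3_bound[OF p_nonneg a_pos _ A3] by fastforce
  define \<rho> where "\<rho> = \<kappa> / (4 * (\<beta>0\<^sup>2 * \<sigma>2 + \<beta>0\<^sup>2 * Q + 1))"
  have XX: "\<beta>0\<^sup>2 * \<sigma>2 + \<beta>0\<^sup>2 * Q \<ge> 0" using \<sigma>2_nonneg Q0 by simp
  have r0: "\<rho> > 0" unfolding \<rho>_def using k0 XX by simp
  define \<delta> where "\<delta> = min (1/8) (ln (1 + \<rho>) / (2 * \<beta>0))"
  have lnr: "ln (1 + \<rho>) > 0" using r0 by simp
  have d0: "\<delta> > 0" unfolding \<delta>_def using lnr b0 by simp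
  have d8: "\<delta> \<le> 1/8" unfolding \<delta>_def by simp
  have dl: "2 * \<beta>0 * \<delta> \<le> ln (1 + \<rho>)"
  proof -
    have "\<delta> \<le> ln (1 + \<rho>) / (2 * \<beta>0)" unfolding \<delta>_def by simp
    then show ?thesis using b0 by (simp add: field_simps)
  qed
  have e_up: "exp (2 * \<beta>0 * \<delta>) \<le> 1 + \<rho>"
  proof -
    have "exp (2 * \<beta>0 * \<delta>) \<le> exp (ln (1 + \<rho>))" using dl by simp
    then show ?thesis using r0 by simp
  qed
  have e_lo: "exp (- (2 * \<beta>0 * \<delta>)) \<ge> 1 - \<rho>"
  proof -
    have "1 + (- (2 * \<beta>0 * \<delta>)) \<le> exp (- (2 * \<beta>0 * \<delta>))" by (rule exp_ge_add_one_self)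
    moreover have "ln (1 + \<rho>) \<le> \<rho>" using r0 by (intro ln_add_one_self_le_self) simp
    ultimately show ?thesis using dl by linarith
  qed
  define Cu where "Cu = \<beta>0\<^sup>2 * exp (2 * \<beta>0 * \<delta>) / 2"
  define Cl where "Cl = \<beta>0\<^sup>2 * exp (- (2 * \<beta>0 * \<delta>)) / 2"
  have Cu0: "Cu \<ge> 0" unfolding Cu_def by simp
  have E1: "(Cu - \<beta>0\<^sup>2 / 2) * \<sigma>2 + (Cu - Cl) * Q < \<kappa> / 4"
  proof -
    have u1: "\<beta>0\<^sup>2 * exp (2 * \<beta>0 * \<delta>) \<le> \<beta>0\<^sup>2 * (1 + \<rho>)" using e_up by (intro mult_left_mono) auto
    have u2: "\<beta>0\<^sup>2 * (1 - \<rho>) \<le> \<beta>0\<^sup>2 * exp (- (2 * \<beta>0 * \<delta>))" using e_lo by (intro mult_left_mono) auto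
    have u1': "\<beta>0\<^sup>2 * exp (2 * \<beta>0 * \<delta>) \<le> \<beta>0\<^sup>2 + \<beta>0\<^sup>2 * \<rho>" using u1 by (simp add: algebra_simps)
    have u2': "\<beta>0\<^sup>2 - \<beta>0\<^sup>2 * \<rho> \<le> \<beta>0\<^sup>2 * exp (- (2 * \<beta>0 * \<delta>))" using u2 by (simp add: algebra_simps)
    have h1: "Cu - \<beta>0\<^sup>2 / 2 \<le> \<beta>0\<^sup>2 * \<rho> / 2"
      unfolding Cu_def using u1' by linarith
    have h2: "Cu - Cl \<le> \<beta>0\<^sup>2 * \<rho>"
      unfolding Cu_def Cl_def using u1' u2' by linarith
    have "(Cu - \<beta>0\<^sup>2 / 2) * \<sigma>2 + (Cu - Cl) * Q \<le> (\<beta>0\<^sup>2 * \<rho> / 2) * \<sigma>2 + (\<beta>0\<^sup>2 * \<rho>) * Q"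
      using h1 h2 \<sigma>2_nonneg Q0 by (intro add_mono mult_right_mono) auto
    also have "\<dots> \<le> \<rho> * (\<beta>0\<^sup>2 * \<sigma>2 + \<beta>0\<^sup>2 * Q)"
      using r0 \<sigma>2_nonneg by (simp add: algebra_simps)
    also have "\<dots> < \<rho> * (\<beta>0\<^sup>2 * \<sigma>2 + \<beta>0\<^sup>2 * Q + 1)" using r0 by simp
    also have "\<dots> = \<kappa> / 4" unfolding \<rho>_def using XX by (simp add: field_simps)
    finally show ?thesis .
  qed
  obtain \<tau> where t0: "0 < \<tau>" and t4: "\<tau> \<le> 1/4"
    and tD: "measure Lm {x. 1 - \<tau> < \<bar>x\<bar> \<and> \<bar>x\<bar> < 1 + \<tau>} < \<kappa> / (4 * (Cu + 2 * \<beta>0 + 1))"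
    using Dsmall[of "\<kappa> / (4 * (Cu + 2 * \<beta>0 + 1))"] k0 Cu0 b0 by auto
  define mDv where "mDv = measure Lm (Dset \<tau>)"
  have mD0: "mDv \<ge> 0" unfolding mDv_def by simp
  have E2: "(Cu + 2 * \<beta>0) * mDv < \<kappa> / 4"
  proof -
    have "(Cu + 2 * \<beta>0) * mDv \<le> (Cu + 2 * \<beta>0 + 1) * mDv" using mD0 by (simp add: algebra_simps)
    also have "\<dots> < (Cu + 2 * \<beta>0 + 1) * (\<kappa> / (4 * (Cu + 2 * \<beta>0 + 1)))"
      using tD Cu0 b0 unfolding mDv_def Dset_def by (intro mult_strict_left_mono) auto
    also have "\<dots> = \<kappa> / 4" using Cu0 b0 by (simp add: field_simps)
    finally show ?thesis .
  qed
  define Lam where "Lam = measure Lm {x. 1/2 \<le> \<bar>x\<bar>}"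
  define R where "R = max 2 ((4 * Lam + 1) / (\<kappa> * \<beta>0))"
  have E3: "exp (- (\<beta>0 * R)) * Lam < \<kappa> / 4"
    by (rule tail_choice) (auto simp: Lam_def R_def k0 b0)
  define L where "L = max 2 ((4 * C3 + 1) / (\<kappa> * (\<beta> - \<beta>0)))"
  have E4: "exp (- ((\<beta> - \<beta>0) * L)) * C3 < \<kappa> / 4"
    by (rule tail_choice) (use C3 k0 b0 in \<open>auto simp: L_def\<close>)
  have R2: "R \<ge> 2" and L2: "L \<ge> 2" unfolding R_def L_def by auto
  interpret pl \<beta>0 \<delta> \<tau> R L Lm
    by unfold_locales (use b0 d0 d8 t0 t4 R2 L2 gint in auto)
  have CupE: "Cup = Cu" unfolding Cup_def Cu_def ..
  have CloE: "Clo = Cl" unfolding Clo_def Cl_def ..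
  define cL where "cL = exp (- (\<beta> - \<beta>0) * L)"
  have cL0: "cL \<ge> 0" unfolding cL_def by simp
  have cLe: "cL = exp (- ((\<beta> - \<beta>0) * L))" unfolding cL_def by (simp only: minus_mult_left)
  have E4': "cL * C3 < \<kappa> / 4" using E4 unfolding cLe .
  define Z where "Z = \<beta>0 * bd + Cu * (\<sigma>2 + Q - (\<integral>x. psi1 \<delta> \<tau> x \<partial>Lm)) + (\<integral>x. F2fn \<beta>0 \<delta> \<tau> R L x \<partial>Lm)"
  have Zb': "Cu * (\<sigma>2 + Q - (\<integral>x. psi1 \<delta> \<tau> x \<partial>Lm)) + (\<integral>x. F2fn \<beta>0 \<delta> \<tau> R L x \<partial>Lm)
     \<le> Cu * \<sigma>2 + (\<integral>x. gfn \<beta>0 x \<partial>Lm) + (Cu - Cl) * Q + (Cu + 2 * \<beta>0) * mDv + exp (- (\<beta>0 * R)) * Lam"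
    using Zb[of \<sigma>2] unfolding CupE CloE Qv_def Q_def mD_def mDv_def Lam1_def Lam_def by simp
  have Zneg: "Z + cL * C3 < 0"
  proof -
    have e1: "(Cu - \<beta>0\<^sup>2 / 2) * \<sigma>2 = Cu * \<sigma>2 - \<sigma>2 * \<beta>0\<^sup>2 / 2" by (simp add: algebra_simps)
    have e2: "\<beta>0 * bd = bd * \<beta>0" by simp
    show ?thesis using Zb' E1 E2 E3 E4' PsiE e1 e2 unfolding Z_def \<kappa>_def by linarith
  qed
  have c1: "(\<lambda>n. a n * Pistar_int p n (\<lambda>x. x * indicator {-1..1} x)) \<longlonglongrightarrow> bd" by (rule A2_b)
  have c2: "(\<lambda>n. a n * Pistar_int p n (\<lambda>x. x\<^sup>2 * indicator {-1..1} x)) \<longlonglongrightarrow> \<sigma>2 + Q"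
    using A2_\<sigma> unfolding Q_def Ifn_def .
  have c3: "(\<lambda>n. a n * Pistar_int p n (psi1 \<delta> \<tau>)) \<longlonglongrightarrow> (\<integral>x. psi1 \<delta> \<tau> x \<partial>Lm)"
  proof (rule A1_wrap[OF A1 psi1_cont _ d0 psi1_small])
    show "(1::real) > 0" by simp
    fix x :: real
    show "x \<le> -1 \<Longrightarrow> psi1 \<delta> \<tau> x = psi1 \<delta> \<tau> (-1)" using psi1_big[of x] psi1_big[of "-1"] by simp
    show "x \<ge> 1 \<Longrightarrow> psi1 \<delta> \<tau> x = 0" using psi1_big[of x] by simp
  qed
  have c4: "(\<lambda>n. a n * Pistar_int p n (F2fn \<beta>0 \<delta> \<tau> R L)) \<longlonglongrightarrow> (\<integral>x. F2fn \<beta>0 \<delta> \<tau> R L x \<partial>Lm)"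
  proof (rule A1_wrap[OF A1 F2_cont _ d0 F2_small])
    show "max R (L + 1) > 0" using R2 by simp
    fix x :: real
    show "x \<le> - max R (L + 1) \<Longrightarrow> F2fn \<beta>0 \<delta> \<tau> R L x = F2fn \<beta>0 \<delta> \<tau> R L (- max R (L + 1))"
      using F2_lo[of x] F2_lo[of "- max R (L + 1)"] by simp
    show "x \<ge> max R (L + 1) \<Longrightarrow> F2fn \<beta>0 \<delta> \<tau> R L x = 0" using F2_hi[of x] by simp
  qed
  define Zn where "Zn n = \<beta>0 * (a n * Pistar_int p n (\<lambda>x. x * indicator {-1..1} x))
       + Cu * (a n * Pistar_int p n (\<lambda>x. x\<^sup>2 * indicator {-1..1} x) - a n * Pistar_int p n (psi1 \<delta> \<tau>))
       + a n * Pistar_int p n (F2fn \<beta>0 \<delta> \<tau> R L)" for n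
  have cZ: "Zn \<longlonglongrightarrow> Z" unfolding Zn_def[abs_def] Z_def
    by (intro tendsto_intros c1 c2 c3 c4)
  have "eventually (\<lambda>n. Zn n < - (cL * C3)) sequentially"
    using cZ Zneg by (intro order_tendstoD(2)) auto
  then obtain NZ where NZ: "\<And>n. n \<ge> NZ \<Longrightarrow> Zn n < - (cL * C3)" by (auto simp: eventually_sequentially)
  show ?thesis
  proof (intro exI[of _ "max (max NZ N3) 1"] allI impI)
    fix j :: nat assume j: "max (max NZ N3) 1 \<le> j"
    have j1: "j \<ge> 1" and jZ: "j \<ge> NZ" and j3: "j \<ge> N3" using j by auto
    have stt: "exp (\<beta>0*y) - 1 \<le> \<beta>0 * (y * indicator {-1..1} y) + Cu * (y\<^sup>2 * indicator {-1..1} y - psi1 \<delta> \<tau> y)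
       + F2fn \<beta>0 \<delta> \<tau> R L y + cL * (exp (\<beta> * y) * indicator {1<..} y)" for y
      using star[OF b0(2), of y] unfolding CupE Ifn_def cL_def .
    obtain sT bT where sT: "summable (\<lambda>k. p j (Suc k) * (exp (\<beta> * (ln (real (Suc k)) - ln (real j))) * indicator {1<..} (ln (real (Suc k)) - ln (real j))))"
      and bT: "a j * (\<Sum>k. p j (Suc k) * (exp (\<beta> * (ln (real (Suc k)) - ln (real j))) * indicator {1<..} (ln (real (Suc k)) - ln (real j)))) \<le> C3"
      using N3[OF j3] by blast
    show "summable (\<lambda>k. p j (Suc k) * real (Suc k) powr \<beta>0) \<and>
          (\<Sum>k. p j (Suc k) * real (Suc k) powr \<beta>0) \<le> real j powr \<beta>0"
    proof (rule per_j[where p=p and j=j and aj="a j" and PA="psi1 \<delta> \<tau>" and PB="F2fn \<beta>0 \<delta> \<tau> R L"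
        and T="\<lambda>x. exp (\<beta>*x) * indicator {1<..} x" and Cu=Cu and cL=cL,
        OF p_nonneg p_sum[OF j1] j1 a_pos[of j] b0(1) stt psi1_bound F2_bound _ sT])
      show "\<And>y. 0 \<le> exp (\<beta> * y) * indicator {1<..} y" by simp
      have "cL * (a j * (\<Sum>k. p j (Suc k) * (exp (\<beta> * (ln (real (Suc k)) - ln (real j))) * indicator {1<..} (ln (real (Suc k)) - ln (real j))))) \<le> cL * C3"
        using bT cL0 by (rule mult_left_mono)
      then show "\<beta>0 * (a j * Pistar_int p j (\<lambda>x. x * indicator {-1..1} x))
       + Cu * (a j * Pistar_int p j (\<lambda>x. x\<^sup>2 * indicator {-1..1} x) - a j * Pistar_int p j (psi1 \<delta> \<tau>))
       + a j * Pistar_int p j (F2fn \<beta>0 \<delta> \<tau> R L) + cL * (a j * (\<Sum>k. p j (Suc k) * (exp (\<beta> * (ln (real (Suc k)) - ln (real j))) * indicator {1<..} (ln (real (Suc k)) - ln (real j))))) < 0"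
        using NZ[OF jZ] unfolding Zn_def by linarith
    qed
  qed
qed

theorem mainTheorem10:
  fixes p :: "nat \<Rightarrow> nat \<Rightarrow> real"
    and M :: "'a measure" and X :: "nat \<Rightarrow> nat \<Rightarrow> 'a \<Rightarrow> nat"
    and a :: "nat \<Rightarrow> real" and \<gamma> :: real
    and Lm :: "real measure" and b \<sigma>2 \<beta> \<beta>0 \<epsilon> :: real
    and N :: "'b measure" and \<xi> :: "real \<Rightarrow> 'b \<Rightarrow> real"
    and K :: nat
  assumes p_nonneg: "\<And>n k. p n k \<ge> 0"
    and p_sum: "\<And>n. n \<ge> 1 \<Longrightarrow> (\<lambda>k. p n (Suc k)) sums 1"
    and M_prob: "prob_space M"
    and X_meas: "\<And>i m. X i m \<in> measurable M (count_space UNIV)"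
    and X_pos: "\<And>i m \<omega>. \<omega> \<in> space M \<Longrightarrow> X i m \<omega> \<ge> 1"
    and X_markov: "\<And>i k (x :: nat \<Rightarrow> nat). i \<ge> 1 \<Longrightarrow> (\<forall>m\<le>k. x m \<ge> 1) \<Longrightarrow>
          measure M {\<omega> \<in> space M. \<forall>m\<le>k. X i m \<omega> = x m}
            = (if x 0 = i then 1 else 0) * (\<Prod>m<k. p (x m) (x (Suc m)))"
    and a_rv: "regularly_varying_seq \<gamma> a" and \<gamma>_pos: "\<gamma> > 0"
    and Pi_sets: "sets Lm = sets borel"
    and Pi_0: "emeasure Lm {0} = 0"
    and Pi_pm1: "emeasure Lm {-1, 1} = 0"
    and Pi_levy: "(\<integral>\<^sup>+ x. ennreal (min 1 (x\<^sup>2)) \<partial>Lm) < \<infinity>"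
    and A1: "\<And>f :: ereal \<Rightarrow> real. continuous_on {0..\<infinity>} f \<Longrightarrow>
          (\<exists>\<delta>>0. \<forall>y\<in>{0..\<infinity>}. \<bar>y - 1\<bar> < ereal \<delta> \<longrightarrow> f y = 0) \<Longrightarrow>
          ((\<lambda>n. a n * (\<Sum>k. p n (Suc k) * f (ereal (real (Suc k) / real n))))
             \<longlongrightarrow> (\<integral>x. f (ereal (exp x)) \<partial>Lm)) sequentially"
    and \<sigma>2_nonneg: "\<sigma>2 \<ge> 0"
    and A2_b: "((\<lambda>n. a n * Pistar_int p n (\<lambda>x. x * indicator {-1..1} x)) \<longlongrightarrow> b) sequentially"
    and A2_\<sigma>: "((\<lambda>n. a n * Pistar_int p n (\<lambda>x. x\<^sup>2 * indicator {-1..1} x))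
          \<longlongrightarrow> \<sigma>2 + (\<integral>x. x\<^sup>2 * indicator {-1..1} x \<partial>Lm)) sequentially"
    and \<beta>_pos: "\<beta> > 0"
    and A3: "limsup (\<lambda>n. ennreal (a n) * Pistar_nn p n (\<lambda>x. exp (\<beta> * x) * indicator {1<..} x)) < \<infinity>"
    and xi_levy: "levy_process N \<xi> (levy_exponent \<sigma>2 b Lm)"
    and xi_drift: "drifts_to_neg_infty N \<xi>"
    and \<beta>0: "0 < \<beta>0" "\<beta>0 < \<beta>"
    and Psi_finite: "integrable Lm (\<lambda>x. exp (\<beta>0 * x) - 1 - \<beta>0 * x * indicator {-1..1} x)"
    and Psi_neg: "Psi \<sigma>2 b Lm \<beta>0 < 0"
    and K_ge: "K \<ge> 1"
    and K_reach: "\<And>n. n \<ge> 1 \<Longrightarrow> measure M {\<omega> \<in> space M. \<exists>m. X n m \<omega> \<le> K} > 0"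
    and \<epsilon>_pos: "\<epsilon> > 0"
  shows "\<exists>n0. \<forall>n\<ge>n0. \<forall>i::nat. 1 \<le> i \<and> real i \<le> \<epsilon>\<^sup>2 * real n \<longrightarrow>
           measure M {\<omega> \<in> space M.
              hit_time (\<lambda>k. X i k \<omega>) {m. real m \<ge> \<epsilon> * real n}
                < hit_time (\<lambda>k. X i k \<omega>) {1..K}} \<le> 2 * \<epsilon> powr \<beta>0"
proof -
  have a_pos: "\<And>n. a n > 0" using a_rv unfolding regularly_varying_seq_def by blast
  have an: "\<exists>x0::nat. \<forall>j\<ge>x0. summable (\<lambda>k. p j (Suc k) * real (Suc k) powr \<beta>0) \<and>
          (\<Sum>k. p j (Suc k) * real (Suc k) powr \<beta>0) \<le> real j powr \<beta>0"
    by (rule analytic[OF p_nonneg p_sum a_pos Pi_sets Pi_pm1 Pi_levy A1 \<sigma>2_nonneg A2_b A2_\<sigma> A3 \<beta>0 Psi_finite Psi_neg])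
  show ?thesis
    by (rule assemble[OF p_nonneg p_sum M_prob X_meas X_pos X_markov \<beta>0(1) K_reach \<epsilon>_pos an])
qed

end
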